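(* Let $G$ be a finite simple graph with at least one vertex. Then $\ell(G)=c(G)$ if and only if $G$ is a CL-graph.
   Context: For a connected graph $H$, $\ell(H)$ denotes the length (number of edges) of a longest induced path in $H$; for an arbitrary graph $G$ with connected components $G_1,\dots,G_t$, $\ell(G)=\ell(G_1)+\cdots+\ell(G_t)$. $c(G)$ denotes the number of maximal cliques of $G$ (a clique is a set of pairwise adjacent vertices). Intersection graph: given a finite list of sets $S_1,\dots,S_m$, the intersection graph on this list has one vertex for each $S_i$ (distinct indices give distinct vertices), and the vertices corresponding to $S_i$ and $S_j$ ($i\neq j$) are adjacent iff $S_i\cap S_j\neq\emptyset$. Connected CL-graph: let $\ell\in\mathbb{N}=\{1,2,\dots\}$ and $r\in\mathbb{N}_0=\{0,1,2,\dots\}$, and let $J_0,J_1,\dots,J_\ell,I_1,\dots,I_r$ be subsets of $\mathbb{R}$ such that: (i) $J_0=\{0\}$ and $J_j=[j-1,j]$ for $1\le j\le \ell$; (ii) for each $1\le i\le r$ there is some $t\in\mathbb{N}$ with $I_i=[a_1,b_1]\cup[a_2,b_2]\cup\cdots\cup[a_t,b_t]$, where $a_1,\dots,a_t\in\mathbb{N}_0$, $b_1,\dots,b_t\in\mathbb{R}$, $a_1<b_1<a_2<b_2<\cdots<a_t<b_t<\ell$, and $a_{k+1}-b_k>2$ for all $1\le k\le t-1$; (iii) if $\{I_{i_1},\dots,I_{i_t}\}\subseteq\{I_1,\dots,I_r\}$ satisfies $I_{i_p}\cap I_{i_q}\neq\emptyset$ for all $1\le p<q\le t$, then $\bigcap_{k=1}^t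 I_{i_k}\neq\emptyset$; (iv) if $I_p\cap I_q\neq\emptyset$ and $j\in I_p\setminus I_q$ for some $j\in\mathbb{N}_0$, then ($j+1\notin I_p$ implies $j+1\notin I_q$) and ($j-1\notin I_p$ implies $j-1\notin I_q$). The intersection graph on $J_0,\dots,J_\ell,I_1,\dots,I_r$ is called a connected CL-graph. A graph is a CL-graph if every connected component of it is isomorphic to a connected CL-graph. *)

theory Defs
  imports Complex_Main
begin

text \<open>A finite simple graph is given by a finite vertex set V and an edge relation
  E (only its restriction to V matters), assumed symmetric and irreflexive on V.\<close>

definition reach :: "'a set \<Rightarrow> ('a \<Rightarrow> 'a \<Rightarrow> bool) \<Rightarrow> 'a \<Rightarrow> 'a \<Rightarrow> bool" where
  "reach V E = (\<lambda>x y. x \<in> V \<and> y \<in> V \<and> E x y)\<^sup>*\<^sup>*"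

definition component :: "'a set \<Rightarrow> ('a \<Rightarrow> 'a \<Rightarrow> bool) \<Rightarrow> 'a \<Rightarrow> 'a set" where
  "component V E v = {u \<in> V. reach V E v u}"

definition components :: "'a set \<Rightarrow> ('a \<Rightarrow> 'a \<Rightarrow> bool) \<Rightarrow> 'a set set" where
  "components V E = component V E ` V"

text \<open>Induced path given as list of vertices v_0,...,v_k; its length is k.\<close>
definition induced_path :: "'a set \<Rightarrow> ('a \<Rightarrow> 'a \<Rightarrow> bool) \<Rightarrow> 'a list \<Rightarrow> bool" where
  "induced_path V E xs \<longleftrightarrow> xs \<noteq> [] \<and> distinct xs \<and> set xs \<subseteq> V \<and>
     (\<forall>i < length xs. \<forall>j < length xs. i < j \<longrightarrow> (E (xs ! i) (xs ! j) \<longleftrightarrow> j = i + 1))"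

definition lip :: "'a set \<Rightarrow> ('a \<Rightarrow> 'a \<Rightarrow> bool) \<Rightarrow> nat" where
  "lip C E = Max {length xs - 1 | xs. induced_path C E xs}"

definition ell :: "'a set \<Rightarrow> ('a \<Rightarrow> 'a \<Rightarrow> bool) \<Rightarrow> nat" where
  "ell V E = (\<Sum>C\<in>components V E. lip C E)"

definition clique :: "'a set \<Rightarrow> ('a \<Rightarrow> 'a \<Rightarrow> bool) \<Rightarrow> 'a set \<Rightarrow> bool" where
  "clique V E K \<longleftrightarrow> K \<subseteq> V \<and> (\<forall>x\<in>K. \<forall>y\<in>K. x \<noteq> y \<longrightarrow> E x y)"

definition maximal_clique :: "'a set \<Rightarrow> ('a \<Rightarrow> 'a \<Rightarrow> bool) \<Rightarrow> 'a set \<Rightarrow> bool" where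
  "maximal_clique V E K \<longleftrightarrow> clique V E K \<and> (\<forall>K'. clique V E K' \<longrightarrow> K \<subseteq> K' \<longrightarrow> K' = K)"

definition num_max_cliques :: "'a set \<Rightarrow> ('a \<Rightarrow> 'a \<Rightarrow> bool) \<Rightarrow> nat" where
  "num_max_cliques V E = card {K. maximal_clique V E K}"

definition graph_iso :: "'a set \<Rightarrow> ('a \<Rightarrow> 'a \<Rightarrow> bool) \<Rightarrow> 'b set \<Rightarrow> ('b \<Rightarrow> 'b \<Rightarrow> bool) \<Rightarrow> bool" where
  "graph_iso V E W F \<longleftrightarrow> (\<exists>f. bij_betw f V W \<and> (\<forall>x\<in>V. \<forall>y\<in>V. E x y \<longleftrightarrow> F (f x) (f y)))"

definition inter_adj :: "('i \<Rightarrow> real set) \<Rightarrow> 'i \<Rightarrow> 'i \<Rightarrow> bool" where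
  "inter_adj S i j \<longleftrightarrow> i \<noteq> j \<and> S i \<inter> S j \<noteq> {}"

definition Jset :: "nat \<Rightarrow> real set" where
  "Jset j = (if j = 0 then {0} else {real j - 1 .. real j})"

text \<open>Condition (ii) for a single set I with parameter l.\<close>
definition CL_interval_union :: "nat \<Rightarrow> real set \<Rightarrow> bool" where
  "CL_interval_union l I \<longleftrightarrow>
     (\<exists>t::nat. \<exists>a::nat \<Rightarrow> nat. \<exists>b::nat \<Rightarrow> real. t \<ge> 1 \<and>
        I = (\<Union>k\<in>{1..t}. {real (a k) .. b k}) \<and>
        (\<forall>k\<in>{1..t}. real (a k) < b k) \<and>
        (\<forall>k\<in>{1..<t}. b k < real (a (k+1)) \<and> real (a (k+1)) - b k > 2) \<and>
        b t < real l)"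

text \<open>Conditions (ii)-(iv) for I_1..I_r (given as I :: nat => real set on {1..r}).\<close>
definition CL_data :: "nat \<Rightarrow> nat \<Rightarrow> (nat \<Rightarrow> real set) \<Rightarrow> bool" where
  "CL_data l r I \<longleftrightarrow> l \<ge> 1 \<and>
     (\<forall>i\<in>{1..r}. CL_interval_union l (I i)) \<and>
     (\<forall>T. T \<subseteq> {1..r} \<longrightarrow> (\<forall>p\<in>T. \<forall>q\<in>T. I p \<inter> I q \<noteq> {}) \<longrightarrow> \<Inter>(I ` T) \<noteq> {}) \<and>
     (\<forall>p\<in>{1..r}. \<forall>q\<in>{1..r}. I p \<inter> I q \<noteq> {} \<longrightarrow>
        (\<forall>j::nat. real j \<in> I p \<and> real j \<notin> I q \<longrightarrow>
           (real j + 1 \<notin> I p \<longrightarrow> real j + 1 \<notin> I q) \<and>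
           (real j - 1 \<notin> I p \<longrightarrow> real j - 1 \<notin> I q)))"

text \<open>Vertices: Inl j stands for J_j (0 \<le> j \<le> l), Inr i for I_i (1 \<le> i \<le> r).\<close>
definition CL_vertices :: "nat \<Rightarrow> nat \<Rightarrow> (nat + nat) set" where
  "CL_vertices l r = Inl ` {0..l} \<union> Inr ` {1..r}"

definition CL_sets :: "(nat \<Rightarrow> real set) \<Rightarrow> nat + nat \<Rightarrow> real set" where
  "CL_sets I v = (case v of Inl j \<Rightarrow> Jset j | Inr i \<Rightarrow> I i)"

definition connected_CL_graph :: "'a set \<Rightarrow> ('a \<Rightarrow> 'a \<Rightarrow> bool) \<Rightarrow> bool" where
  "connected_CL_graph V E \<longleftrightarrow>
     (\<exists>l r I. CL_data l r I \<and> graph_iso V E (CL_vertices l r) (inter_adj (CL_sets I)))"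

definition CL_graph :: "'a set \<Rightarrow> ('a \<Rightarrow> 'a \<Rightarrow> bool) \<Rightarrow> bool" where
  "CL_graph V E \<longleftrightarrow> (\<forall>C\<in>components V E. connected_CL_graph C E)"

end

theory Submission
  imports Defs
begin


definition symG :: "'a set \<Rightarrow> ('a \<Rightarrow> 'a \<Rightarrow> bool) \<Rightarrow> bool" where
  "symG V E \<longleftrightarrow> (\<forall>x\<in>V. \<forall>y\<in>V. E x y \<longrightarrow> E y x)"

lemma ip_fin:
  assumes "finite V"
  shows "finite {length xs - 1 | xs. induced_path V E xs}"
proof -
  have "{length xs - 1 | xs. induced_path V E xs} \<subseteq> {0..card V}"
  proof
    fix n assume "n \<in> {length xs - 1 | xs. induced_path V E xs}"
    then obtain xs where "n = length xs - 1" "induced_path V E xs" by auto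
    then have "distinct xs" "set xs \<subseteq> V" by (auto simp: induced_path_def)
    then have "length xs \<le> card V"
      by (metis assms card_mono distinct_card)
    then show "n \<in> {0..card V}" using \<open>n = _\<close> by auto
  qed
  then show ?thesis using finite_subset by blast
qed

lemma ip_le:
  assumes "finite V" "induced_path V E xs"
  shows "length xs - 1 \<le> lip V E"
  unfolding lip_def using ip_fin[OF assms(1)] assms(2)
  by (intro Max_ge) auto

lemma ip_ex:
  assumes "finite V" "V \<noteq> {}"
  shows "\<exists>xs. induced_path V E xs \<and> length xs - 1 = lip V E"
proof -
  obtain v where "v \<in> V" using assms by auto
  then have "induced_path V E [v]" by (auto simp: induced_path_def)
  then have ne: "{length xs - 1 | xs. induced_path V E xs} \<noteq> {}" by auto
  have "lip V E \<in> {length xs - 1 | xs. induced_path V E xs}"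
    unfolding lip_def using Max_in[OF ip_fin[OF assms(1)] ne] .
  then show ?thesis by auto
qed

lemma ip_adj:
  assumes "symG V E" "induced_path V E xs" "i < length xs" "j < length xs" "i \<noteq> j"
  shows "E (xs ! i) (xs ! j) \<longleftrightarrow> (j = i + 1 \<or> i = j + 1)"
proof (cases "i < j")
  case True then show ?thesis using assms unfolding induced_path_def by auto
next
  case False
  then have "j < i" using assms by auto
  have "xs ! i \<in> V" "xs ! j \<in> V" using assms unfolding induced_path_def by auto
  then have "E (xs ! i) (xs ! j) \<longleftrightarrow> E (xs ! j) (xs ! i)" using assms(1) unfolding symG_def by blast
  then show ?thesis using \<open>j < i\<close> assms unfolding induced_path_def by auto
qed

lemma maxcl_ex:
  assumes "finite V" "clique V E K"
  shows "\<exists>K'. maximal_clique V E K' \<and> K \<subseteq> K'"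
proof -
  let ?A = "{K'. clique V E K' \<and> K \<subseteq> K'}"
  have "?A \<subseteq> Pow V" by (auto simp: clique_def)
  then have fA: "finite ?A" using assms(1) finite_subset by blast
  have "K \<in> ?A" using assms(2) by simp
  then have nA: "?A \<noteq> {}" by blast
  obtain m where m: "m \<in> ?A" "\<forall>b\<in>?A. m \<le> b \<longrightarrow> m = b"
    using finite_has_maximal[OF fA nA] by (elim bexE)
  then have "maximal_clique V E m" unfolding maximal_clique_def by auto
  then show ?thesis using m by auto
qed

lemma maxcl_fin:
  assumes "finite V"
  shows "finite {K. maximal_clique V E K}"
proof -
  have "{K. maximal_clique V E K} \<subseteq> Pow V" by (auto simp: maximal_clique_def clique_def)
  then show ?thesis using assms finite_subset by blast
qed

lemma clique_pair:
  assumes "symG V E" "x \<in> V" "y \<in> V" "E x y"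
  shows "clique V E {x, y}"
  using assms unfolding clique_def symG_def by auto

lemma clique_E:
  assumes "clique V E K" "x \<in> K" "y \<in> K" "x \<noteq> y"
  shows "E x y"
  using assms unfolding clique_def by auto

definition pQ :: "'a set \<Rightarrow> ('a \<Rightarrow> 'a \<Rightarrow> bool) \<Rightarrow> 'a list \<Rightarrow> nat \<Rightarrow> 'a set" where
  "pQ V E xs i = (SOME K. maximal_clique V E K \<and> {xs ! (i - 1), xs ! i} \<subseteq> K)"

lemma pQ_prop:
  assumes "finite V" "symG V E" "induced_path V E xs" "i \<in> {1..<length xs}"
  shows "maximal_clique V E (pQ V E xs i) \<and> xs ! (i - 1) \<in> pQ V E xs i \<and> xs ! i \<in> pQ V E xs i"
proof -
  have "E (xs ! (i - 1)) (xs ! i)" using ip_adj[OF assms(2,3), of "i - 1" i] assms(4) by auto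
  moreover have "xs ! (i - 1) \<in> V" "xs ! i \<in> V" using assms(3,4)
    unfolding induced_path_def by auto
  ultimately have "clique V E {xs ! (i - 1), xs ! i}" using clique_pair assms(2) by metis
  then have "\<exists>K. maximal_clique V E K \<and> {xs ! (i - 1), xs ! i} \<subseteq> K"
    using maxcl_ex[OF assms(1)] by blast
  then have "maximal_clique V E (pQ V E xs i) \<and> {xs ! (i - 1), xs ! i} \<subseteq> pQ V E xs i"
    unfolding pQ_def by (rule someI_ex)
  then show ?thesis by simp
qed

lemma pQ_three:
  assumes "finite V" "symG V E" "induced_path V E xs" "i \<in> {1..<length xs}"
    "j < length xs" "xs ! j \<in> pQ V E xs i"
  shows "j = i - 1 \<or> j = i"
proof (rule ccontr)
  assume nj: "\<not> (j = i - 1 \<or> j = i)"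
  note Q = pQ_prop[OF assms(1-4)]
  have dist: "distinct xs" using assms(3) unfolding induced_path_def by auto
  have cl: "clique V E (pQ V E xs i)" using Q unfolding maximal_clique_def by auto
  have "xs ! j \<noteq> xs ! (i - 1)" "xs ! j \<noteq> xs ! i" using nj dist assms(4,5)
    by (auto simp: nth_eq_iff_index_eq)
  then have "E (xs ! j) (xs ! (i - 1))" "E (xs ! j) (xs ! i)"
    using clique_E[OF cl] Q assms(6) by auto
  moreover have "j \<noteq> i - 1" "j \<noteq> i" "i - 1 < length xs" "i < length xs" using nj assms(4) by auto
  ultimately have "i - 1 = j + 1 \<or> j = i - 1 + 1" "i = j + 1 \<or> j = i + 1"
    using ip_adj[OF assms(2,3), of j "i - 1"] ip_adj[OF assms(2,3), of j i] assms(5) by auto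
  then show False using nj assms(4) by auto
qed

lemma pQ_inj:
  assumes "finite V" "symG V E" "induced_path V E xs"
  shows "inj_on (pQ V E xs) {1..<length xs}"
proof (rule inj_onI)
  fix i j
  assume a: "i \<in> {1..<length xs}" "j \<in> {1..<length xs}" "pQ V E xs i = pQ V E xs j"
  have "xs ! (i - 1) \<in> pQ V E xs j" "xs ! i \<in> pQ V E xs j" using pQ_prop[OF assms a(1)] a(3) by auto
  then have "i - 1 = j - 1 \<or> i - 1 = j" "i = j - 1 \<or> i = j"
    using pQ_three[OF assms a(2), of "i - 1"] pQ_three[OF assms a(2), of i] a by auto
  moreover have "1 \<le> i" "1 \<le> j" using a by auto
  ultimately show "i = j" by presburger
qed

lemma lip_le_ncl:
  assumes "finite V" "V \<noteq> {}" "symG V E"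
  shows "lip V E \<le> num_max_cliques V E"
proof -
  obtain xs where xs: "induced_path V E xs" "length xs - 1 = lip V E"
    using ip_ex[OF assms(1,2)] by blast
  have "card (pQ V E xs ` {1..<length xs}) = length xs - 1"
    using card_image[OF pQ_inj[OF assms(1,3) xs(1)]] by simp
  moreover have "pQ V E xs ` {1..<length xs} \<subseteq> {K. maximal_clique V E K}"
  proof
    fix K assume "K \<in> pQ V E xs ` {1..<length xs}"
    then obtain i where "i \<in> {1..<length xs}" "K = pQ V E xs i" by blast
    then show "K \<in> {K. maximal_clique V E K}" using pQ_prop[OF assms(1,3) xs(1)] by simp
  qed
  then have "card (pQ V E xs ` {1..<length xs}) \<le> card {K. maximal_clique V E K}"
    by (rule card_mono[OF maxcl_fin[OF assms(1)]])
  ultimately show ?thesis unfolding num_max_cliques_def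
    using xs(2) by simp
qed



lemma iso_sym:
  assumes "graph_iso V E W F"
  shows "graph_iso W F V E"
proof -
  obtain f where f: "bij_betw f V W" "\<forall>x\<in>V. \<forall>y\<in>V. E x y \<longleftrightarrow> F (f x) (f y)"
    using assms unfolding graph_iso_def by blast
  let ?g = "inv_into V f"
  have g: "bij_betw ?g W V" using bij_betw_inv_into[OF f(1)] .
  have fg: "f (?g y) = y" if "y \<in> W" for y using f(1) that by (simp add: bij_betw_inv_into_right)
  have "F x y \<longleftrightarrow> E (?g x) (?g y)" if "x \<in> W" "y \<in> W" for x y
  proof -
    have "?g x \<in> V" "?g y \<in> V" using g that bij_betwE by blast+
    then have "E (?g x) (?g y) \<longleftrightarrow> F (f (?g x)) (f (?g y))" using f(2) by blast
    then show ?thesis using fg that by simp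
  qed
  then show ?thesis unfolding graph_iso_def using g by blast
qed

lemma iso_lip_le:
  assumes "graph_iso V E W F" "finite V" "finite W" "V \<noteq> {}"
  shows "lip V E \<le> lip W F"
proof -
  obtain f where f: "bij_betw f V W" "\<forall>x\<in>V. \<forall>y\<in>V. E x y \<longleftrightarrow> F (f x) (f y)"
    using assms unfolding graph_iso_def by blast
  obtain xs where xs: "induced_path V E xs" "length xs - 1 = lip V E"
    using ip_ex[OF assms(2,4)] by blast
  have sv: "set xs \<subseteq> V" using xs(1) unfolding induced_path_def by auto
  have "induced_path W F (map f xs)"
    unfolding induced_path_def
  proof (intro conjI allI impI)
    show "map f xs \<noteq> []" using xs(1) unfolding induced_path_def by auto
    have "inj_on f (set xs)" using f(1) sv by (meson bij_betw_def inj_on_subset)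
    then show "distinct (map f xs)" using xs(1) by (simp add: distinct_map induced_path_def)
    show "set (map f xs) \<subseteq> W" using sv f(1) bij_betwE by fastforce
    fix i j assume ij: "i < length (map f xs)" "j < length (map f xs)" "i < j"
    have "xs ! i \<in> V" "xs ! j \<in> V" using ij sv by auto
    then have "F (map f xs ! i) (map f xs ! j) \<longleftrightarrow> E (xs ! i) (xs ! j)" using f(2) ij by simp
    also have "\<dots> \<longleftrightarrow> j = i + 1" using xs(1) ij unfolding induced_path_def by simp
    finally show "F (map f xs ! i) (map f xs ! j) \<longleftrightarrow> j = i + 1" .
  qed
  from ip_le[OF assms(3) this] show ?thesis using xs(2) by simp
qed

lemma iso_ncl_le:
  assumes "graph_iso V E W F" "finite W"
  shows "num_max_cliques V E \<le> num_max_cliques W F"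
proof -
  obtain f where f: "bij_betw f V W" "\<forall>x\<in>V. \<forall>y\<in>V. E x y \<longleftrightarrow> F (f x) (f y)"
    using assms unfolding graph_iso_def by blast
  define g where "g = inv_into V f"
  have g1: "bij_betw g W V" unfolding g_def using bij_betw_inv_into[OF f(1)] .
  have fg: "\<And>y. y \<in> W \<Longrightarrow> f (g y) = y" unfolding g_def using f(1)
    by (simp add: bij_betw_inv_into_right)
  have inj: "inj_on f V" using f(1) bij_betw_def by blast
  have gf: "\<And>x. x \<in> V \<Longrightarrow> g (f x) = x" unfolding g_def using inj by simp
  have g2: "\<forall>x\<in>W. \<forall>y\<in>W. F x y \<longleftrightarrow> E (g x) (g y)"
  proof (intro ballI)
    fix x y assume "x \<in> W" "y \<in> W"
    then have "g x \<in> V" "g y \<in> V" using g1 bij_betwE by blast+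
    then have "E (g x) (g y) \<longleftrightarrow> F (f (g x)) (f (g y))" using f(2) by blast
    then show "F x y \<longleftrightarrow> E (g x) (g y)" using fg \<open>x \<in> W\<close> \<open>y \<in> W\<close> by simp
  qed
  note g = g1 g2
  have cl1: "clique W F (f ` K)" if "clique V E K" for K
  proof -
    have "K \<subseteq> V" using that unfolding clique_def by blast
    then have "f ` K \<subseteq> W" using f(1) bij_betwE by blast
    moreover have "F a b" if ab: "a \<in> f ` K" "b \<in> f ` K" "a \<noteq> b" for a b
    proof -
      obtain x y where "x \<in> K" "y \<in> K" "a = f x" "b = f y" using ab by blast
      then have "x \<noteq> y" "x \<in> V" "y \<in> V" using \<open>a \<noteq> b\<close> \<open>K \<subseteq> V\<close> by auto
      then show ?thesis using clique_E[OF \<open>clique V E K\<close>] f(2) \<open>x \<in> K\<close> \<open>y \<in> K\<close> \<open>a = f x\<close> \<open>b = f y\<close> by blast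
    qed
    ultimately show ?thesis unfolding clique_def by blast
  qed
  have cl2: "clique V E (g ` K)" if "clique W F K" for K
  proof -
    have "K \<subseteq> W" using that unfolding clique_def by blast
    then have "g ` K \<subseteq> V" using g(1) bij_betwE by blast
    moreover have "E a b" if ab: "a \<in> g ` K" "b \<in> g ` K" "a \<noteq> b" for a b
    proof -
      obtain x y where "x \<in> K" "y \<in> K" "a = g x" "b = g y" using ab by blast
      then have "x \<noteq> y" "x \<in> W" "y \<in> W" using \<open>a \<noteq> b\<close> \<open>K \<subseteq> W\<close> by auto
      then show ?thesis using clique_E[OF \<open>clique W F K\<close>] g(2) \<open>x \<in> K\<close> \<open>y \<in> K\<close> \<open>a = g x\<close> \<open>b = g y\<close> by blast
    qed
    ultimately show ?thesis unfolding clique_def by blast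
  qed
  have mc: "maximal_clique W F (f ` K)" if "maximal_clique V E K" for K
  proof -
    have c: "clique V E K" and m: "\<And>K'. clique V E K' \<Longrightarrow> K \<subseteq> K' \<Longrightarrow> K' = K"
      using that unfolding maximal_clique_def by auto
    have "K' = f ` K" if "clique W F K'" "f ` K \<subseteq> K'" for K'
    proof -
      have KV: "K \<subseteq> V" using c unfolding clique_def by blast
      have K'W: "K' \<subseteq> W" using that unfolding clique_def by blast
      have "K \<subseteq> g ` K'"
      proof
        fix x assume "x \<in> K"
        then have "f x \<in> K'" "x \<in> V" using that(2) KV by auto
        moreover have "g (f x) = x" using \<open>x \<in> V\<close> gf by blast
        ultimately show "x \<in> g ` K'" by (metis imageI)
      qed
      then have "g ` K' = K" using m cl2[OF that(1)] by blast
      then have "f ` g ` K' = f ` K" by simp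
      moreover have "f ` g ` K' = K'" using fg K'W by (force simp: image_image)
      ultimately show ?thesis by simp
    qed
    then show ?thesis using cl1[OF c] unfolding maximal_clique_def by blast
  qed
  have "inj_on (image f) {K. maximal_clique V E K}"
  proof (rule inj_onI)
    fix A B assume "A \<in> {K. maximal_clique V E K}" "B \<in> {K. maximal_clique V E K}" "f ` A = f ` B"
    moreover have "A \<subseteq> V" "B \<subseteq> V" using calculation unfolding maximal_clique_def clique_def by auto
    ultimately show "A = B" using inj_on_image_eq_iff[OF inj] by blast
  qed
  moreover have "image f ` {K. maximal_clique V E K} \<subseteq> {K. maximal_clique W F K}"
    using mc by blast
  ultimately show ?thesis unfolding num_max_cliques_def
    using card_inj_on_le[OF _ _ maxcl_fin[OF assms(2)]] by blast
qed



lemma symG_sub: "symG V E \<Longrightarrow> C \<subseteq> V \<Longrightarrow> symG C E"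
  unfolding symG_def by blast

lemma reach_sym:
  assumes "symG V E" "reach V E u v"
  shows "reach V E v u"
proof -
  have "symp (\<lambda>x y. x \<in> V \<and> y \<in> V \<and> E x y)"
    using assms(1) unfolding symG_def symp_def by blast
  then show ?thesis using assms(2) unfolding reach_def by (meson sympD symp_rtranclp)
qed

lemma reach_trans: "reach V E u v \<Longrightarrow> reach V E v w \<Longrightarrow> reach V E u w"
  unfolding reach_def by (meson rtranclp_trans)

lemma reach_edge: "x \<in> V \<Longrightarrow> y \<in> V \<Longrightarrow> E x y \<Longrightarrow> reach V E x y"
  unfolding reach_def by (simp add: r_into_rtranclp)

lemma comp_sub: "component V E v \<subseteq> V"
  unfolding component_def by blast

lemma comp_self: "v \<in> V \<Longrightarrow> v \<in> component V E v"
  unfolding component_def reach_def by simp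

lemma comp_eq:
  assumes "symG V E" "u \<in> component V E v"
  shows "component V E u = component V E v"
proof -
  have uv: "reach V E v u" using assms(2) unfolding component_def by blast
  have vu: "reach V E u v" using reach_sym[OF assms(1) uv] .
  have "reach V E u x \<longleftrightarrow> reach V E v x" for x
    using reach_trans[OF uv, of x] reach_trans[OF vu, of x] by blast
  then show ?thesis unfolding component_def by simp
qed

lemma comps_disj:
  assumes "symG V E" "C1 \<in> components V E" "C2 \<in> components V E" "x \<in> C1" "x \<in> C2"
  shows "C1 = C2"
proof -
  obtain v1 v2 where "C1 = component V E v1" "C2 = component V E v2"
    using assms(2,3) unfolding components_def by blast
  then show ?thesis using comp_eq[OF assms(1)] assms(4,5) by metis
qed

lemma comps_fin: "finite V \<Longrightarrow> finite (components V E)"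
  unfolding components_def by simp

lemma comp_props:
  assumes "finite V" "C \<in> components V E"
  shows "C \<subseteq> V" "C \<noteq> {}" "finite C"
proof -
  obtain v where v: "v \<in> V" "C = component V E v"
    using assms(2) unfolding components_def by blast
  show "C \<subseteq> V" using v comp_sub by metis
  show "C \<noteq> {}" using v comp_self[OF v(1), of E] by blast
  show "finite C" using v comp_sub assms(1) finite_subset by metis
qed

lemma comp_closed:
  assumes "C \<in> components V E" "x \<in> C" "y \<in> V" "E x y"
  shows "y \<in> C"
proof -
  obtain v where v: "v \<in> V" "C = component V E v"
    using assms(1) unfolding components_def by blast
  have "reach V E v x" "x \<in> V" using assms(2) v unfolding component_def by auto
  then have "reach V E v y" using reach_trans reach_edge assms(3,4) by metis
  then show ?thesis using v assms(3) unfolding component_def by blast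
qed

lemma maxcl_ne:
  assumes "V \<noteq> {}" "maximal_clique V E K"
  shows "K \<noteq> {}"
proof
  assume "K = {}"
  obtain v where "v \<in> V" using assms(1) by blast
  then have "clique V E {v}" unfolding clique_def by blast
  then show False using assms(2) \<open>K = {}\<close> unfolding maximal_clique_def by blast
qed

lemma clique_in_comp:
  assumes "C \<in> components V E" "clique V E K" "k \<in> K" "k \<in> C"
  shows "K \<subseteq> C"
proof
  fix x assume "x \<in> K"
  show "x \<in> C"
  proof (cases "x = k")
    case True then show ?thesis using assms by simp
  next
    case False
    then have "E k x" using clique_E[OF assms(2) assms(3) \<open>x \<in> K\<close>] by simp
    moreover have "x \<in> V" using assms(2) \<open>x \<in> K\<close> unfolding clique_def by blast
    ultimately show ?thesis using comp_closed[OF assms(1,4)] by blast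
  qed
qed

lemma maxcl_comp:
  assumes "finite V" "C \<in> components V E"
  shows "maximal_clique C E K \<longleftrightarrow> maximal_clique V E K \<and> K \<subseteq> C"
proof
  have CV: "C \<subseteq> V" "C \<noteq> {}" using comp_props[OF assms] by auto
  assume m: "maximal_clique C E K"
  then have K: "K \<noteq> {}" "K \<subseteq> C" "clique V E K" using maxcl_ne[OF CV(2)] CV(1)
    unfolding maximal_clique_def clique_def by auto
  then obtain k where k: "k \<in> K" "k \<in> C" by blast
  have "K' = K" if "clique V E K'" "K \<subseteq> K'" for K'
  proof -
    have "K' \<subseteq> C" using clique_in_comp[OF assms(2) that(1)] k that(2) by blast
    then have "clique C E K'" using that(1) unfolding clique_def by blast
    then show ?thesis using m that(2) unfolding maximal_clique_def by blast
  qed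
  then show "maximal_clique V E K \<and> K \<subseteq> C" using K unfolding maximal_clique_def by blast
next
  assume a: "maximal_clique V E K \<and> K \<subseteq> C"
  then have "clique C E K" unfolding maximal_clique_def clique_def by blast
  moreover have "K' = K" if "clique C E K'" "K \<subseteq> K'" for K'
  proof -
    have "clique V E K'" using that(1) comp_props[OF assms] unfolding clique_def by blast
    then show ?thesis using a that(2) unfolding maximal_clique_def by blast
  qed
  ultimately show "maximal_clique C E K" unfolding maximal_clique_def by blast
qed

lemma ncl_sum:
  assumes "finite V" "V \<noteq> {}" "symG V E"
  shows "num_max_cliques V E = (\<Sum>C\<in>components V E. num_max_cliques C E)"
proof -
  have eq: "{K. maximal_clique V E K} = (\<Union>C\<in>components V E. {K. maximal_clique C E K})"
  proof (intro equalityI subsetI)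
    fix K assume "K \<in> {K. maximal_clique V E K}"
    then have m: "maximal_clique V E K" by simp
    then obtain k where "k \<in> K" using maxcl_ne[OF assms(2)] by blast
    then have kV: "k \<in> V" using m unfolding maximal_clique_def clique_def by blast
    let ?C = "component V E k"
    have C: "?C \<in> components V E" using kV unfolding components_def by blast
    have "K \<subseteq> ?C" using clique_in_comp[OF C _ \<open>k \<in> K\<close> comp_self[OF kV]] m
      unfolding maximal_clique_def by blast
    then have "maximal_clique ?C E K" using maxcl_comp[OF assms(1) C] m by blast
    then show "K \<in> (\<Union>C\<in>components V E. {K. maximal_clique C E K})" using C by blast
  next
    fix K assume "K \<in> (\<Union>C\<in>components V E. {K. maximal_clique C E K})"
    then obtain C where "C \<in> components V E" "maximal_clique C E K" by blast
    then show "K \<in> {K. maximal_clique V E K}" using maxcl_comp[OF assms(1)] by blast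
  qed
  have "card (\<Union>C\<in>components V E. {K. maximal_clique C E K}) =
        (\<Sum>C\<in>components V E. card {K. maximal_clique C E K})"
  proof (rule card_UN_disjoint)
    show "finite (components V E)" using comps_fin[OF assms(1)] .
    show "\<forall>C\<in>components V E. finite {K. maximal_clique C E K}"
    proof
      fix C assume "C \<in> components V E"
      then show "finite {K. maximal_clique C E K}" using maxcl_fin comp_props(3)[OF assms(1)] by blast
    qed
    show "\<forall>C1\<in>components V E. \<forall>C2\<in>components V E. C1 \<noteq> C2 \<longrightarrow>
          {K. maximal_clique C1 E K} \<inter> {K. maximal_clique C2 E K} = {}"
    proof (intro ballI impI)
      fix C1 C2 assume c: "C1 \<in> components V E" "C2 \<in> components V E" "C1 \<noteq> C2"
      show "{K. maximal_clique C1 E K} \<inter> {K. maximal_clique C2 E K} = {}"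
      proof (rule ccontr)
        assume "{K. maximal_clique C1 E K} \<inter> {K. maximal_clique C2 E K} \<noteq> {}"
        then obtain K where K: "maximal_clique C1 E K" "maximal_clique C2 E K" by blast
        have "K \<noteq> {}" using maxcl_ne[OF comp_props(2)[OF assms(1) c(1)] K(1)] .
        then obtain x where "x \<in> K" by blast
        then have "x \<in> C1" "x \<in> C2" using K unfolding maximal_clique_def clique_def by blast+
        then show False using comps_disj[OF assms(3) c(1,2)] c(3) by blast
      qed
    qed
  qed
  then show ?thesis unfolding num_max_cliques_def using eq by simp
qed

lemma ell_iff:
  assumes "finite V" "V \<noteq> {}" "symG V E"
  shows "ell V E = num_max_cliques V E \<longleftrightarrow> (\<forall>C\<in>components V E. lip C E = num_max_cliques C E)"
proof -
  have le: "lip C E \<le> num_max_cliques C E" if "C \<in> components V E" for C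
    using lip_le_ncl[OF comp_props(3,2)[OF assms(1) that] symG_sub[OF assms(3) comp_props(1)[OF assms(1) that]]] .
  show ?thesis
  proof
    assume "ell V E = num_max_cliques V E"
    then have "(\<Sum>C\<in>components V E. lip C E) = (\<Sum>C\<in>components V E. num_max_cliques C E)"
      unfolding ell_def ncl_sum[OF assms] .
    then show "\<forall>C\<in>components V E. lip C E = num_max_cliques C E"
      using sum_mono_inv[where f="\<lambda>C. lip C E" and g="\<lambda>C. num_max_cliques C E", OF _ le _ comps_fin[OF assms(1)]]
      by blast
  next
    assume "\<forall>C\<in>components V E. lip C E = num_max_cliques C E"
    then show "ell V E = num_max_cliques V E" unfolding ell_def ncl_sum[OF assms]
      by simp
  qed
qed



definition fset :: "nat set \<Rightarrow> real set" where
  "fset P = {y. \<exists>p\<in>P. real p \<le> y \<and> y \<le> real p + 1/2} \<union>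
            {y. \<exists>p\<in>P. Suc p \<in> P \<and> real p \<le> y \<and> y \<le> real p + 1}"

lemma fset_elem:
  assumes "y \<in> fset P"
  shows "\<exists>p\<in>P. real p \<le> y \<and> y \<le> real p + 1 \<and> (y > real p + 1/2 \<longrightarrow> Suc p \<in> P)"
  using assms unfolding fset_def by force

lemma fset_nonneg: "y \<in> fset P \<Longrightarrow> 0 \<le> y"
  using fset_elem by force

lemma fset_int: "real j \<in> fset P \<longleftrightarrow> j \<in> P"
proof
  assume "real j \<in> fset P"
  then obtain p where p: "p \<in> P" "real p \<le> real j" "real j \<le> real p + 1"
    "real j > real p + 1/2 \<longrightarrow> Suc p \<in> P" using fset_elem by blast
  then have "p \<le> j" "j \<le> p + 1" by linarith+
  then have "j = p \<or> j = Suc p" by auto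
  then show "j \<in> P"
  proof
    assume "j = Suc p" then show ?thesis using p(4) by simp
  qed (use p in simp)
next
  assume "j \<in> P" then show "real j \<in> fset P" unfolding fset_def by force
qed

lemma fset_inter: "fset P \<inter> fset P' \<noteq> {} \<longleftrightarrow> P \<inter> P' \<noteq> {}"
proof
  assume "fset P \<inter> fset P' \<noteq> {}"
  then obtain y where "y \<in> fset P" "y \<in> fset P'" by blast
  then obtain p q where p: "p \<in> P" "real p \<le> y" "y \<le> real p + 1"
    "y > real p + 1/2 \<longrightarrow> Suc p \<in> P"
    and q: "q \<in> P'" "real q \<le> y" "y \<le> real q + 1" "y > real q + 1/2 \<longrightarrow> Suc q \<in> P'"
    using fset_elem by meson
  consider "p = q" | "q = Suc p" | "p = Suc q"
  proof -
    have "p \<le> q + 1" "q \<le> p + 1" using p q by linarith+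
    then show ?thesis using that by linarith
  qed
  then show "P \<inter> P' \<noteq> {}"
  proof cases
    case 1 then show ?thesis using p q by blast
  next
    case 2
    then have "y > real p + 1/2" using q(2) by simp
    then show ?thesis using p(4) q(1) 2 by blast
  next
    case 3
    then have "y > real q + 1/2" using p(2) by simp
    then show ?thesis using q(4) p(1) 3 by blast
  qed
next
  assume "P \<inter> P' \<noteq> {}"
  then obtain p where "p \<in> P" "p \<in> P'" by blast
  then have "real p \<in> fset P" "real p \<in> fset P'" using fset_int by blast+
  then show "fset P \<inter> fset P' \<noteq> {}" by blast
qed

lemma Jset_int: "real j \<in> Jset j"
  unfolding Jset_def by auto

lemma Jset_int2: "1 \<le> j \<Longrightarrow> real (j - 1) \<in> Jset j"
  unfolding Jset_def by auto

lemma Jset_elem: "y \<in> Jset j \<Longrightarrow> (j = 0 \<and> y = 0) \<or> (1 \<le> j \<and> real j - 1 \<le> y \<and> y \<le> real j)"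
  unfolding Jset_def by (auto split: if_splits)

lemma fset_J: "fset P \<inter> Jset j \<noteq> {} \<longleftrightarrow> (1 \<le> j \<and> j - 1 \<in> P) \<or> j \<in> P"
proof
  assume "fset P \<inter> Jset j \<noteq> {}"
  then obtain y where y: "y \<in> fset P" "y \<in> Jset j" by blast
  show "(1 \<le> j \<and> j - 1 \<in> P) \<or> j \<in> P"
  proof (cases "j = 0")
    case True
    then have "y = 0" using Jset_elem[OF y(2)] by simp
    then have "real 0 \<in> fset P" using y by simp
    then show ?thesis using True fset_int by blast
  next
    case False
    then have yj: "real j - 1 \<le> y" "y \<le> real j" using Jset_elem[OF y(2)] by auto
    obtain p where p: "p \<in> P" "real p \<le> y" "y \<le> real p + 1"
      "y > real p + 1/2 \<longrightarrow> Suc p \<in> P" using fset_elem[OF y(1)] by blast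
    have "p \<le> j" "j \<le> p + 2" using p yj by linarith+
    then consider "p = j" | "p = j - 1" | "p = j - 2" "2 \<le> j" by linarith
    then show ?thesis
    proof cases
      case 1 then show ?thesis using p by simp
    next
      case 2 then show ?thesis using p False by simp
    next
      case 3
      then have "real p = real j - 2" by simp
      then have "y > real p + 1/2" using yj by linarith
      then have "Suc p \<in> P" using p(4) by blast
      moreover have "Suc p = j - 1" using 3 by simp
      ultimately show ?thesis using False by simp
    qed
  qed
next
  assume a: "(1 \<le> j \<and> j - 1 \<in> P) \<or> j \<in> P"
  then show "fset P \<inter> Jset j \<noteq> {}"
  proof
    assume "1 \<le> j \<and> j - 1 \<in> P"
    then have "real (j - 1) \<in> fset P" "real (j - 1) \<in> Jset j" using fset_int Jset_int2 by blast+
    then show ?thesis by blast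
  next
    assume "j \<in> P"
    then have "real j \<in> fset P" "real j \<in> Jset j" using fset_int Jset_int by blast+
    then show ?thesis by blast
  qed
qed

lemma Jset_inter: "Jset i \<inter> Jset j \<noteq> {} \<longleftrightarrow> (i = j \<or> i = Suc j \<or> j = Suc i)"
proof
  assume "Jset i \<inter> Jset j \<noteq> {}"
  then obtain y where y: "y \<in> Jset i" "y \<in> Jset j" by blast
  have "real i \<le> real j + 1" "real j \<le> real i + 1"
    using Jset_elem[OF y(1)] Jset_elem[OF y(2)] by linarith+
  then have "i \<le> j + 1" "j \<le> i + 1" by linarith+
  then show "i = j \<or> i = Suc j \<or> j = Suc i" by linarith
next
  assume "i = j \<or> i = Suc j \<or> j = Suc i"
  then show "Jset i \<inter> Jset j \<noteq> {}"
  proof (elim disjE)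
    assume "i = j" then show ?thesis using Jset_int by blast
  next
    assume "i = Suc j"
    then have "real j \<in> Jset i" "real j \<in> Jset j" using Jset_int Jset_int2[of i] by auto
    then show ?thesis by blast
  next
    assume "j = Suc i"
    then have "real i \<in> Jset i" "real i \<in> Jset j" using Jset_int Jset_int2[of j] by auto
    then show ?thesis by blast
  qed
qed



definition nogap :: "nat set \<Rightarrow> bool" where
  "nogap P \<longleftrightarrow> (\<forall>p. p \<in> P \<longrightarrow> p + 2 \<in> P \<longrightarrow> p + 1 \<in> P)"

definition reprs :: "nat set \<Rightarrow> nat \<Rightarrow> (nat \<Rightarrow> nat) \<Rightarrow> (nat \<Rightarrow> real) \<Rightarrow> bool" where
  "reprs P t a b \<longleftrightarrow> t \<ge> 1 \<and>
        fset P = (\<Union>k\<in>{1..t}. {real (a k) .. b k}) \<and>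
        (\<forall>k\<in>{1..t}. real (a k) < b k) \<and>
        (\<forall>k\<in>{1..<t}. b k < real (a (k+1)) \<and> real (a (k+1)) - b k > 2) \<and>
        b t = real (Max P) + 1/2"

lemma fset_single: "fset {m} = {real m .. real m + 1/2}"
  unfolding fset_def by auto

lemma fset_mono: "P \<subseteq> P' \<Longrightarrow> fset P \<subseteq> fset P'"
  unfolding fset_def by blast

lemma fset_splitA:
  assumes "finite P" "m = Max P" "P \<noteq> {}" "1 \<le> m" "m - 1 \<in> P"
  shows "fset P = fset (P - {m}) \<union> {real m - 1 .. real m + 1/2}"
proof (intro equalityI subsetI)
  fix y assume y: "y \<in> fset P"
  have mP: "m \<in> P" using assms Max_in by blast
  have nS: "Suc m \<notin> P" using Max_ge[OF assms(1), of "Suc m"] assms(2) by auto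
  show "y \<in> fset (P - {m}) \<union> {real m - 1 .. real m + 1/2}"
  proof (cases "y \<in> {y. \<exists>p\<in>P. real p \<le> y \<and> y \<le> real p + 1/2}")
    case True
    then obtain p where p: "p \<in> P" "real p \<le> y" "y \<le> real p + 1/2" by blast
    show ?thesis
    proof (cases "p = m")
      case True then show ?thesis using p by auto
    next
      case False then have "p \<in> P - {m}" using p by blast
      then have "y \<in> fset (P - {m})" using p unfolding fset_def by blast
      then show ?thesis by blast
    qed
  next
    case False
    then obtain p where p: "p \<in> P" "Suc p \<in> P" "real p \<le> y" "y \<le> real p + 1"
      using y unfolding fset_def by blast
    have "p \<noteq> m" using p(2) nS by blast
    show ?thesis
    proof (cases "Suc p = m")
      case True
      then have "real p = real m - 1" by auto
      then show ?thesis using p by auto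
    next
      case False
      then have "p \<in> P - {m}" "Suc p \<in> P - {m}" using p \<open>p \<noteq> m\<close> by auto
      then have "y \<in> fset (P - {m})" using p unfolding fset_def by blast
      then show ?thesis by blast
    qed
  qed
next
  fix y assume y: "y \<in> fset (P - {m}) \<union> {real m - 1 .. real m + 1/2}"
  have mP: "m \<in> P" using assms Max_in by blast
  show "y \<in> fset P"
  proof (cases "y \<in> fset (P - {m})")
    case True then show ?thesis using fset_mono[of "P - {m}" P] by blast
  next
    case False
    then have y2: "real m - 1 \<le> y" "y \<le> real m + 1/2" using y by auto
    show ?thesis
    proof (cases "y \<le> real m")
      case True
      have "Suc (m - 1) \<in> P" using mP assms(4) by simp
      moreover have "real (m - 1) = real m - 1" using assms(4) by simp
      ultimately show ?thesis unfolding fset_def using assms(5) y2 True by force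
    next
      case False
      then show ?thesis unfolding fset_def using mP y2 by force
    qed
  qed
qed

lemma fset_splitB:
  assumes "finite P" "m = Max P" "P \<noteq> {}" "1 \<le> m \<longrightarrow> m - 1 \<notin> P"
  shows "fset P = fset (P - {m}) \<union> {real m .. real m + 1/2}"
proof (intro equalityI subsetI)
  fix y assume y: "y \<in> fset P"
  have mP: "m \<in> P" using assms Max_in by blast
  have nS: "Suc m \<notin> P" using Max_ge[OF assms(1), of "Suc m"] assms(2) by auto
  show "y \<in> fset (P - {m}) \<union> {real m .. real m + 1/2}"
  proof (cases "y \<in> {y. \<exists>p\<in>P. real p \<le> y \<and> y \<le> real p + 1/2}")
    case True
    then obtain p where p: "p \<in> P" "real p \<le> y" "y \<le> real p + 1/2" by blast
    show ?thesis
    proof (cases "p = m")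
      case True then show ?thesis using p by auto
    next
      case False then have "p \<in> P - {m}" using p by blast
      then have "y \<in> fset (P - {m})" using p unfolding fset_def by blast
      then show ?thesis by blast
    qed
  next
    case False
    then obtain p where p: "p \<in> P" "Suc p \<in> P" "real p \<le> y" "y \<le> real p + 1"
      using y unfolding fset_def by blast
    have "p \<noteq> m" using p(2) nS by blast
    have "Suc p \<noteq> m" using assms(4) p(1) by auto
    then have "p \<in> P - {m}" "Suc p \<in> P - {m}" using p \<open>p \<noteq> m\<close> by auto
    then have "y \<in> fset (P - {m})" using p unfolding fset_def by blast
    then show ?thesis by blast
  qed
next
  fix y assume y: "y \<in> fset (P - {m}) \<union> {real m .. real m + 1/2}"
  have mP: "m \<in> P" using assms Max_in by blast
  show "y \<in> fset P"
  proof (cases "y \<in> fset (P - {m})")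
    case True then show ?thesis using fset_mono[of "P - {m}" P] by blast
  next
    case False
    then have y2: "real m \<le> y" "y \<le> real m + 1/2" using y by auto
    then show ?thesis unfolding fset_def using mP by force
  qed
qed

lemma union_upd:
  assumes "\<forall>k\<in>{1..t}. a' k = a k \<and> b' k = b k"
  shows "(\<Union>k\<in>{1..Suc t}. {real (a' k) .. b' k}) = (\<Union>k\<in>{1..t}. {real (a k) .. b k}) \<union> {real (a' (Suc t)) .. b' (Suc t)}"
proof -
  have "{1..Suc t} = insert (Suc t) {1..t}" by auto
  then have "(\<Union>k\<in>{1..Suc t}. {real (a' k) .. b' k}) = {real (a' (Suc t)) .. b' (Suc t)} \<union> (\<Union>k\<in>{1..t}. {real (a' k) .. b' k})"
    by simp
  also have "(\<Union>k\<in>{1..t}. {real (a' k) .. b' k}) = (\<Union>k\<in>{1..t}. {real (a k) .. b k})"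
    using assms by (intro SUP_cong) auto
  finally show ?thesis by blast
qed

lemma reprs_ex:
  "finite P \<Longrightarrow> P \<noteq> {} \<Longrightarrow> nogap P \<Longrightarrow> \<exists>t a b. reprs P t a b"
proof (induction "card P" arbitrary: P rule: less_induct)
  case less
  define m where "m = Max P"
  define P' where "P' = P - {m}"
  have mP: "m \<in> P" using less m_def Max_in by blast
  have "card P > 0" using less(2,3) by (simp add: card_gt_0_iff)
  moreover have "card P' = card P - 1" unfolding P'_def using mP less(2) by (simp add: card_Diff_singleton)
  ultimately have cP': "card P' < card P" by linarith
  have fP': "finite P'" unfolding P'_def using less(2) by simp
  have ngP': "nogap P'"
    unfolding nogap_def
  proof (intro allI impI)
    fix p assume "p \<in> P'" "p + 2 \<in> P'"
    then have "p \<in> P" "p + 2 \<in> P" "p + 2 \<noteq> m" unfolding P'_def by auto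
    moreover have "p + 2 \<le> m" using \<open>p + 2 \<in> P\<close> less(2) m_def by simp
    ultimately show "p + 1 \<in> P'" using less(4) unfolding nogap_def P'_def by auto
  qed
  have leP': "q < m" if "q \<in> P'" for q
  proof -
    have "q \<in> P" "q \<noteq> m" using that unfolding P'_def by auto
    then show ?thesis using Max_ge[OF less(2), of q] m_def by simp
  qed
  show ?case
  proof (cases "1 \<le> m \<and> m - 1 \<in> P")
    case True
    have split: "fset P = fset P' \<union> {real m - 1 .. real m + 1/2}"
      unfolding P'_def using fset_splitA[OF less(2) m_def less(3)] True by blast
    have m1: "m - 1 \<in> P'" using True unfolding P'_def by auto
    then have neP': "P' \<noteq> {}" by blast
    have MP': "Max P' = m - 1"
    proof (rule antisym)
      show "Max P' \<le> m - 1" using leP'[OF Max_in[OF fP' neP']] by simp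
      show "m - 1 \<le> Max P'" using Max_ge[OF fP' m1] .
    qed
    obtain t a b where r: "reprs P' t a b" using less(1)[OF cP' fP' neP' ngP'] by blast
    define b' where "b' = b(t := real m + 1/2)"
    have bt: "b t = real m - 1/2" using r MP' True unfolding reprs_def by auto
    have t1: "1 \<le> t" using r unfolding reprs_def by simp
    have "\<forall>k\<in>{1..t}. real (a k) < b k" using r unfolding reprs_def by blast
    then have at: "real (a t) < b t" using t1 by simp
    then have at2: "a t \<le> m - 1" using bt True by linarith
    have "reprs P t a b'"
      unfolding reprs_def
    proof (intro conjI)
      show "1 \<le> t" by fact
      have "{1..t} = insert t {1..<t}" using t1 by auto
      then have U1: "(\<Union>k\<in>{1..t}. {real (a k) .. b' k}) = {real (a t) .. real m + 1/2} \<union> (\<Union>k\<in>{1..<t}. {real (a k) .. b k})"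
        unfolding b'_def by auto
      have U2: "fset P' = {real (a t) .. real m - 1/2} \<union> (\<Union>k\<in>{1..<t}. {real (a k) .. b k})"
        using r \<open>{1..t} = insert t {1..<t}\<close> bt unfolding reprs_def by auto
      have eqI: "{real (a t) .. real m - 1/2} \<union> {real m - 1 .. real m + 1/2} = {real (a t) .. real m + 1/2}"
      proof -
        have am1: "real (a t) \<le> real (m - 1)" using at2 by simp
        have "real (m - 1) = real m - 1" using True by (simp add: of_nat_diff)
        then have am: "real (a t) \<le> real m - 1" using am1 by simp
        show ?thesis
        proof (intro equalityI subsetI)
          fix x assume "x \<in> {real (a t) .. real m - 1/2} \<union> {real m - 1 .. real m + 1/2}"
          then show "x \<in> {real (a t) .. real m + 1/2}" using am by auto
        next
          fix x assume x: "x \<in> {real (a t) .. real m + 1/2}"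
          show "x \<in> {real (a t) .. real m - 1/2} \<union> {real m - 1 .. real m + 1/2}"
          proof (cases "x \<le> real m - 1/2")
            case True then show ?thesis using x by simp
          next
            case False then show ?thesis using x by simp
          qed
        qed
      qed
      let ?R = "(\<Union>k\<in>{1..<t}. {real (a k) .. b k})"
      have "fset P = ({real (a t) .. real m - 1/2} \<union> ?R) \<union> {real m - 1 .. real m + 1/2}"
        using split U2 by simp
      also have "\<dots> = ({real (a t) .. real m - 1/2} \<union> {real m - 1 .. real m + 1/2}) \<union> ?R"
        by (simp add: Un_ac)
      also have "\<dots> = {real (a t) .. real m + 1/2} \<union> ?R" using eqI by simp
      also have "\<dots> = (\<Union>k\<in>{1..t}. {real (a k) .. b' k})" using U1 by simp
      finally show "fset P = (\<Union>k\<in>{1..t}. {real (a k) .. b' k})" .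
      have ak: "\<forall>k\<in>{1..t}. real (a k) < b k" using r unfolding reprs_def by blast
      show "\<forall>k\<in>{1..t}. real (a k) < b' k"
      proof
        fix k assume k: "k \<in> {1..t}"
        show "real (a k) < b' k"
        proof (cases "k = t")
          case True then show ?thesis using at bt unfolding b'_def by simp
        next
          case False then show ?thesis using ak k unfolding b'_def by simp
        qed
      qed
      have gk: "\<forall>k\<in>{1..<t}. b k < real (a (k+1)) \<and> real (a (k+1)) - b k > 2" using r unfolding reprs_def by blast
      show "\<forall>k\<in>{1..<t}. b' k < real (a (k+1)) \<and> real (a (k+1)) - b' k > 2"
        using gk unfolding b'_def by simp
      show "b' t = real (Max P) + 1/2" unfolding b'_def m_def by simp
    qed
    then show ?thesis by blast
  next
    case False
    have split: "fset P = fset P' \<union> {real m .. real m + 1/2}"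
      unfolding P'_def using fset_splitB[OF less(2) m_def less(3)] False by blast
    show ?thesis
    proof (cases "P' = {}")
      case True
      then have "fset P = {real m .. real m + 1/2}" using split unfolding fset_def by simp
      then have "reprs P 1 (\<lambda>_. m) (\<lambda>_. real m + 1/2)" unfolding reprs_def m_def by simp
      then show ?thesis by blast
    next
      case neP': False
      obtain t a b where r: "reprs P' t a b" using less(1)[OF cP' fP' neP' ngP'] by blast
      define m' where "m' = Max P'"
      have m'P: "m' \<in> P'" using Max_in[OF fP' neP'] m'_def by simp
      have "m' < m" using leP' m'P by blast
      moreover have "m' \<noteq> m - 1" using False m'P \<open>m' < m\<close> unfolding P'_def by auto
      moreover have "m' \<noteq> m - 2"
      proof
        assume "m' = m - 2"
        then have "m' + 2 = m" using \<open>m' < m\<close> \<open>m' \<noteq> m - 1\<close> by linarith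
        then have "m' + 1 \<in> P" using less(4) m'P mP unfolding nogap_def P'_def by auto
        then show False using False \<open>m' + 2 = m\<close> by auto
      qed
      ultimately have m3: "m' + 3 \<le> m" by linarith
      have t1: "1 \<le> t" using r unfolding reprs_def by simp
      have bt: "b t = real m' + 1/2" using r m'_def unfolding reprs_def by simp
      define a' where "a' = a(Suc t := m)"
      define b' where "b' = b(Suc t := real m + 1/2)"
      have eqk: "\<forall>k\<in>{1..t}. a' k = a k \<and> b' k = b k" unfolding a'_def b'_def by auto
      have "reprs P (Suc t) a' b'"
        unfolding reprs_def
      proof (intro conjI)
        show "1 \<le> Suc t" by simp
        show "fset P = (\<Union>k\<in>{1..Suc t}. {real (a' k) .. b' k})"
          using union_upd[OF eqk] split r unfolding reprs_def a'_def b'_def by simp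
        show "\<forall>k\<in>{1..Suc t}. real (a' k) < b' k"
          using r eqk unfolding reprs_def by (auto simp: a'_def b'_def le_Suc_eq)
        show "\<forall>k\<in>{1..<Suc t}. b' k < real (a' (k+1)) \<and> real (a' (k+1)) - b' k > 2"
        proof
          fix k assume k: "k \<in> {1..<Suc t}"
          show "b' k < real (a' (k+1)) \<and> real (a' (k+1)) - b' k > 2"
          proof (cases "k = t")
            case True
            then have "b' k = real m' + 1/2" "a' (k+1) = m" using bt unfolding a'_def b'_def by auto
            then show ?thesis using m3 by simp
          next
            case False
            then have "k \<in> {1..<t}" using k by auto
            then show ?thesis using r unfolding reprs_def a'_def b'_def by auto
          qed
        qed
        show "b' (Suc t) = real (Max P) + 1/2" unfolding b'_def m_def by simp
      qed
      then show ?thesis by blast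
    qed
  qed
qed

lemma fset_CL:
  assumes "finite P" "P \<noteq> {}" "nogap P" "\<forall>p\<in>P. p < l"
  shows "CL_interval_union l (fset P)"
proof -
  obtain t a b where r: "reprs P t a b" using reprs_ex[OF assms(1-3)] by blast
  have "Max P < l" using assms Max_in by blast
  then have "b t < real l" using r unfolding reprs_def by simp
  then show ?thesis using r unfolding reprs_def CL_interval_union_def by blast
qed



lemma chain:
  fixes a b :: "nat \<Rightarrow> real"
  assumes "\<forall>k\<in>{1..t}. a k < b k" "\<forall>k\<in>{1..<t}. b k + 2 < a (k+1)"
  shows "1 \<le> k1 \<Longrightarrow> k1 < k2 \<Longrightarrow> k2 \<le> t \<Longrightarrow> b k1 + 2 < a k2"
proof (induction k2)
  case 0 then show ?case by simp
next
  case (Suc k2)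
  show ?case
  proof (cases "k1 = k2")
    case True then show ?thesis using assms(2) Suc by auto
  next
    case False
    then have "b k1 + 2 < a k2" using Suc by auto
    moreover have "a k2 < b k2" using assms(1) Suc False by auto
    moreover have "b k2 + 2 < a (Suc k2)" using assms(2) Suc False by auto
    ultimately show ?thesis by linarith
  qed
qed

lemma CLu_elem:
  assumes "CL_interval_union l S"
  obtains t :: nat and a :: "nat \<Rightarrow> nat" and b :: "nat \<Rightarrow> real" where "t \<ge> 1" "S = (\<Union>k\<in>{1..t}. {real (a k) .. b k})"
    "\<forall>k\<in>{1..t}. real (a k) < b k"
    "\<forall>k\<in>{1..<t}. b k + 2 < real (a (k+1))" "b t < real l"
    "\<And>k1 k2. 1 \<le> k1 \<Longrightarrow> k1 < k2 \<Longrightarrow> k2 \<le> t \<Longrightarrow> b k1 + 2 < real (a k2)"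
proof -
  obtain t :: nat and a :: "nat \<Rightarrow> nat" and b :: "nat \<Rightarrow> real" where r: "t \<ge> 1" "S = (\<Union>k\<in>{1..t}. {real (a k) .. b k})"
    "\<forall>k\<in>{1..t}. real (a k) < b k"
    "\<forall>k\<in>{1..<t}. b k < real (a (k+1)) \<and> real (a (k+1)) - b k > 2" "b t < real l"
    using assms unfolding CL_interval_union_def by blast
  have g: "\<forall>k\<in>{1..<t}. b k + 2 < real (a (k+1))" using r(4) by auto
  have c: "b k1 + 2 < real (a k2)" if "1 \<le> k1" "k1 < k2" "k2 \<le> t" for k1 k2
    using chain[of t "\<lambda>k. real (a k)" b, OF r(3) g that] .
  show ?thesis by (rule that[OF r(1,2,3) g r(5) c])
qed

lemma CLu_bounds:
  assumes "CL_interval_union l S" "y \<in> S"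
  shows "0 \<le> y" "y < real l"
proof -
  obtain t :: nat and a :: "nat \<Rightarrow> nat" and b :: "nat \<Rightarrow> real" where r: "t \<ge> 1" "S = (\<Union>k\<in>{1..t}. {real (a k) .. b k})"
    "\<forall>k\<in>{1..t}. real (a k) < b k"
    "\<forall>k\<in>{1..<t}. b k + 2 < real (a (k+1))" "b t < real l"
    "\<And>k1 k2. 1 \<le> k1 \<Longrightarrow> k1 < k2 \<Longrightarrow> k2 \<le> t \<Longrightarrow> b k1 + 2 < real (a k2)"
    using CLu_elem[OF assms(1)] by blast
  obtain k where k: "k \<in> {1..t}" "real (a k) \<le> y" "y \<le> b k" using r(2) assms(2) by auto
  show "0 \<le> y" using k(2) by (meson of_nat_0_le_iff order_trans)
  have "b k \<le> b t"
  proof (cases "k = t")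
    case False
    then have "b k + 2 < real (a t)" using r(6)[of k t] k(1) by auto
    moreover have "real (a t) < b t" using r(3) r(1) by auto
    ultimately show ?thesis by linarith
  qed simp
  then show "y < real l" using k(3) r(5) by linarith
qed

lemma CLu_floor:
  assumes "CL_interval_union l S" "y \<in> S"
  shows "real (nat \<lfloor>y\<rfloor>) \<in> S"
proof -
  obtain t :: nat and a :: "nat \<Rightarrow> nat" and b :: "nat \<Rightarrow> real" where r: "t \<ge> 1" "S = (\<Union>k\<in>{1..t}. {real (a k) .. b k})"
    using assms(1) unfolding CL_interval_union_def by blast
  obtain k where k: "k \<in> {1..t}" "real (a k) \<le> y" "y \<le> b k" using r(2) assms(2) by auto
  have y0: "0 \<le> y" using k(2) by (meson of_nat_0_le_iff order_trans)
  have e: "real (nat \<lfloor>y\<rfloor>) = of_int \<lfloor>y\<rfloor>" using y0 by simp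
  have f1: "of_int \<lfloor>y\<rfloor> \<le> y" by simp
  have "int (a k) \<le> \<lfloor>y\<rfloor>" using k(2) by (simp add: le_floor_iff)
  then have "real (a k) \<le> of_int \<lfloor>y\<rfloor>" by linarith
  then have g1: "real (a k) \<le> real (nat \<lfloor>y\<rfloor>)" using e by linarith
  have g2: "real (nat \<lfloor>y\<rfloor>) \<le> b k" using e f1 k(3) by linarith
  have "real (nat \<lfloor>y\<rfloor>) \<in> {real (a k) .. b k}" using g1 g2 by simp
  then show ?thesis using r(2) k(1) by blast
qed

lemma CLu_ne:
  assumes "CL_interval_union l S"
  shows "S \<noteq> {}"
proof -
  obtain t :: nat and a :: "nat \<Rightarrow> nat" and b :: "nat \<Rightarrow> real" where r: "t \<ge> 1" "S = (\<Union>k\<in>{1..t}. {real (a k) .. b k})"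
    "\<forall>k\<in>{1..t}. real (a k) < b k"
    using assms unfolding CL_interval_union_def by blast
  have "1 \<in> {1..t}" using r(1) by simp
  then have "real (a 1) < b 1" using r(3) by blast
  then have "real (a 1) \<in> {real (a 1) .. b 1}" by auto
  then have "real (a 1) \<in> S" using r(1,2) by auto
  then show ?thesis by blast
qed

lemma CLu_J:
  assumes "CL_interval_union l S" "S \<inter> Jset j \<noteq> {}"
  shows "(j = 0 \<longrightarrow> real 0 \<in> S) \<and> (1 \<le> j \<longrightarrow> real (j - 1) \<in> S \<or> real j \<in> S)"
proof -
  obtain t :: nat and a :: "nat \<Rightarrow> nat" and b :: "nat \<Rightarrow> real" where r: "t \<ge> 1" "S = (\<Union>k\<in>{1..t}. {real (a k) .. b k})"
    using assms(1) unfolding CL_interval_union_def by blast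
  obtain y where y: "y \<in> S" "y \<in> Jset j" using assms(2) by blast
  obtain k where k: "k \<in> {1..t}" "real (a k) \<le> y" "y \<le> b k" using r(2) y(1) by auto
  have "real (j - 1) \<in> S \<or> real j \<in> S" if j1: "1 \<le> j"
  proof -
    have yj: "real j - 1 \<le> y" "y \<le> real j" using Jset_elem[OF y(2)] j1 by auto
    have rj: "real (j - 1) = real j - 1" using j1 by (simp add: of_nat_diff)
    show ?thesis
    proof (cases "a k < j - 1")
      case True
      then have "real (a k) \<le> real (j - 1)" by simp
      then have "real (j - 1) \<in> {real (a k) .. b k}" using rj yj k by simp
      then show ?thesis using r(2) k(1) by blast
    next
      case False
      then have "a k = j - 1 \<or> a k = j"
      proof -
        have "real (a k) \<le> real j" using k yj by linarith
        then have "a k \<le> j" by simp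
        then show ?thesis using False by linarith
      qed
      moreover have "real (a k) \<in> S" using k r(2) by force
      ultimately show ?thesis by auto
    qed
  qed
  moreover have "real 0 \<in> S" if "j = 0"
  proof -
    have "y = 0" using Jset_elem[OF y(2)] that by simp
    then show ?thesis using y by simp
  qed
  ultimately show ?thesis by blast
qed

lemma CLu_J2:
  assumes "CL_interval_union l S" "S \<inter> Jset j \<noteq> {}" "S \<inter> Jset (Suc j) \<noteq> {}"
  shows "real j \<in> S"
proof (rule ccontr)
  assume nj: "real j \<notin> S"
  obtain t :: nat and a :: "nat \<Rightarrow> nat" and b :: "nat \<Rightarrow> real" where r: "t \<ge> 1" "S = (\<Union>k\<in>{1..t}. {real (a k) .. b k})"
    "\<forall>k\<in>{1..t}. real (a k) < b k"
    "\<forall>k\<in>{1..<t}. b k + 2 < real (a (k+1))" "b t < real l"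
    "\<And>k1 k2. 1 \<le> k1 \<Longrightarrow> k1 < k2 \<Longrightarrow> k2 \<le> t \<Longrightarrow> b k1 + 2 < real (a k2)"
    using CLu_elem[OF assms(1)] by blast
  obtain y where y: "y \<in> S" "y \<in> Jset (Suc j)" using assms(3) by blast
  obtain k where k: "k \<in> {1..t}" "real (a k) \<le> y" "y \<le> b k" using r(2) y(1) by auto
  have yj: "real j \<le> y" "y \<le> real j + 1" using Jset_elem[OF y(2)] by auto
  have akj: "real (a k) = real j + 1"
  proof -
    have "\<not> real (a k) \<le> real j"
    proof
      assume "real (a k) \<le> real j"
      then have "real j \<in> {real (a k) .. b k}" using yj k by simp
      then show False using nj r(2) k(1) by blast
    qed
    then have "a k > j" by simp
    moreover have "a k \<le> j + 1" using k(2) yj by simp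
    ultimately show ?thesis by simp
  qed
  have "real (j - 1) \<in> S \<and> 1 \<le> j"
    using CLu_J[OF assms(1,2)] nj by (cases "j = 0") auto
  then obtain k' where k': "k' \<in> {1..t}" "real (a k') \<le> real j - 1" "real j - 1 \<le> b k'"
    using r(2) by (auto simp: of_nat_diff)
  have bk': "b k' < real j"
  proof (rule ccontr)
    assume "\<not> b k' < real j"
    then have "real j \<in> {real (a k') .. b k'}" using k' by simp
    then show False using nj r(2) k'(1) by blast
  qed
  consider "k' = k" | "k' < k" | "k < k'" by linarith
  then show False
  proof cases
    case 1 then show False using akj k' by simp
  next
    case 2
    then have "b k' + 2 < real (a k)" using r(6)[of k' k] k k' by auto
    then show False using akj k' by linarith
  next
    case 3
    then have "b k + 2 < real (a k')" using r(6)[of k k'] k k' by auto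
    moreover have "real (a k) < b k" using r(3) k by blast
    ultimately show False using akj k' by linarith
  qed
qed



lemma CLs_l[simp]: "CL_sets I (Inl j) = Jset j" by (simp add: CL_sets_def)
lemma CLs_r[simp]: "CL_sets I (Inr i) = I i" by (simp add: CL_sets_def)
lemma CLv_l[simp]: "Inl j \<in> CL_vertices l r \<longleftrightarrow> j \<le> l" by (auto simp: CL_vertices_def)
lemma CLv_r[simp]: "Inr i \<in> CL_vertices l r \<longleftrightarrow> i \<in> {1..r}" by (auto simp: CL_vertices_def)

lemma CLD1: "CL_data l r I \<Longrightarrow> 1 \<le> l"
  unfolding CL_data_def by (erule conjunct1)
lemma CLD2: "CL_data l r I \<Longrightarrow> i \<in> {1..r} \<Longrightarrow> CL_interval_union l (I i)"
  unfolding CL_data_def by (drule conjunct2, drule conjunct1) (erule bspec)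
lemma CLD3: "CL_data l r I \<Longrightarrow> T \<subseteq> {1..r} \<Longrightarrow> (\<forall>p\<in>T. \<forall>q\<in>T. I p \<inter> I q \<noteq> {}) \<Longrightarrow> \<Inter>(I ` T) \<noteq> {}"
  unfolding CL_data_def by (drule conjunct2, drule conjunct2, drule conjunct1) blast
lemma CLD4: "CL_data l r I \<Longrightarrow> p \<in> {1..r} \<Longrightarrow> q \<in> {1..r} \<Longrightarrow> I p \<inter> I q \<noteq> {} \<Longrightarrow>
  real j \<in> I p \<Longrightarrow> real j \<notin> I q \<Longrightarrow>
  (real j + 1 \<notin> I p \<longrightarrow> real j + 1 \<notin> I q) \<and> (real j - 1 \<notin> I p \<longrightarrow> real j - 1 \<notin> I q)"
  unfolding CL_data_def by (drule conjunct2, drule conjunct2, drule conjunct2) blast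

lemma CL_ne:
  assumes "CL_data l r I" "v \<in> CL_vertices l r"
  shows "CL_sets I v \<noteq> {}"
proof (cases v)
  case (Inl j) then show ?thesis using Jset_int[of j] by auto
next
  case (Inr i)
  then have "i \<in> {1..r}" using assms(2) by simp
  then have ci: "CL_interval_union l (I i)" using CLD2[OF assms(1)] by blast
  show ?thesis using CLu_ne[OF ci] Inr by simp
qed

lemma clique_pw:
  assumes "CL_data l r I" "clique (CL_vertices l r) (inter_adj (CL_sets I)) K" "v \<in> K" "w \<in> K"
  shows "CL_sets I v \<inter> CL_sets I w \<noteq> {}"
proof (cases "v = w")
  case True
  have "v \<in> CL_vertices l r" using assms(2,3) unfolding clique_def by blast
  then show ?thesis using CL_ne[OF assms(1)] True by simp
next
  case False
  then show ?thesis using clique_E[OF assms(2,3,4)] unfolding inter_adj_def by blast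
qed

lemma KH:
  assumes D: "CL_data l r I" and K: "clique (CL_vertices l r) (inter_adj (CL_sets I)) K"
  shows "\<exists>p<l. \<forall>v\<in>K. real p \<in> CL_sets I v"
proof -
  have l1: "1 \<le> l" using CLD1[OF D] .
  have KW: "K \<subseteq> CL_vertices l r" using K unfolding clique_def by blast
  have pw: "\<And>v w. v \<in> K \<Longrightarrow> w \<in> K \<Longrightarrow> CL_sets I v \<inter> CL_sets I w \<noteq> {}"
    using clique_pw[OF D K] by blast
  have CLi: "\<And>i. Inr i \<in> K \<Longrightarrow> CL_interval_union l (I i)"
  proof -
    fix i assume "Inr i \<in> K"
    then have "i \<in> {1..r}" using KW by auto
    then show "CL_interval_union l (I i)" using CLD2[OF D] by blast
  qed
  have iv: "\<And>p q. Inr p \<in> K \<Longrightarrow> Inr q \<in> K \<Longrightarrow> \<forall>j::nat. real j \<in> I p \<and> real j \<notin> I q \<longrightarrow>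
           (real j + 1 \<notin> I p \<longrightarrow> real j + 1 \<notin> I q) \<and> (real j - 1 \<notin> I p \<longrightarrow> real j - 1 \<notin> I q)"
  proof -
    fix p q assume pq: "Inr p \<in> K" "Inr q \<in> K"
    then have "p \<in> {1..r}" "q \<in> {1..r}" using KW by auto
    moreover have "I p \<inter> I q \<noteq> {}" using pw[OF pq] by simp
    ultimately show "\<forall>j::nat. real j \<in> I p \<and> real j \<notin> I q \<longrightarrow>
           (real j + 1 \<notin> I p \<longrightarrow> real j + 1 \<notin> I q) \<and> (real j - 1 \<notin> I p \<longrightarrow> real j - 1 \<notin> I q)"
      using CLD4[OF D] by blast
  qed
  show ?thesis
  proof (cases "\<exists>j. Inl j \<in> K")
    case False
    then have allr: "\<forall>v\<in>K. \<exists>i. v = Inr i" by (metis sum.exhaust)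
    show ?thesis
    proof (cases "K = {}")
      case True then show ?thesis using l1 by (intro exI[of _ 0]) auto
    next
      case Kne: False
      define T where "T = {i. Inr i \<in> K}"
      have T: "T \<subseteq> {1..r}" unfolding T_def using KW by auto
      have "\<forall>p\<in>T. \<forall>q\<in>T. I p \<inter> I q \<noteq> {}" unfolding T_def using pw by fastforce
      then have "\<Inter>(I ` T) \<noteq> {}" using CLD3[OF D T] by blast
      then obtain y where y: "\<And>i. i \<in> T \<Longrightarrow> y \<in> I i" by blast
      obtain v where v0: "v \<in> K" using Kne by blast
      then obtain i0 where "v = Inr i0" using allr by blast
      then have i0: "Inr i0 \<in> K" using v0 by simp
      have "y < real l" using CLu_bounds(2)[OF CLi[OF i0] y] i0 T_def by simp
      moreover have "0 \<le> y" using CLu_bounds(1)[OF CLi[OF i0] y] i0 T_def by simp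
      ultimately have pl: "nat \<lfloor>y\<rfloor> < l" by linarith
      have "\<forall>v\<in>K. real (nat \<lfloor>y\<rfloor>) \<in> CL_sets I v"
      proof
        fix v assume v: "v \<in> K"
        then obtain i where i: "v = Inr i" using allr by blast
        then have "i \<in> T" using v T_def by simp
        then show "real (nat \<lfloor>y\<rfloor>) \<in> CL_sets I v" using CLu_floor[OF CLi y] i v T_def by simp
      qed
      then show ?thesis using pl by blast
    qed
  next
    case True
    then obtain j where j: "Inl j \<in> K" by blast
    have jl: "j \<le> l" using j KW by auto
    have Jnb: "\<And>j'. Inl j' \<in> K \<Longrightarrow> j' = j \<or> j' = Suc j \<or> j = Suc j'"
      using pw[OF j] Jset_inter by fastforce
    have pairc: "\<exists>p<l. \<forall>v\<in>K. real p \<in> CL_sets I v" if jj: "Inl jj \<in> K" "Inl (Suc jj) \<in> K" for jj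
    proof -
      have "Suc jj \<le> l" using jj KW by auto
      then have "jj < l" by simp
      moreover have "\<forall>v\<in>K. real jj \<in> CL_sets I v"
      proof
        fix v assume v: "v \<in> K"
        show "real jj \<in> CL_sets I v"
        proof (cases v)
          case (Inl j')
          have a1: "Jset j' \<inter> Jset jj \<noteq> {}" "Jset j' \<inter> Jset (Suc jj) \<noteq> {}"
            using pw[OF v jj(1)] pw[OF v jj(2)] Inl by auto
          then have "j' = jj \<or> j' = Suc jj" using Jset_inter by auto
          then show ?thesis using Inl Jset_int Jset_int2[of "Suc jj"] by auto
        next
          case (Inr i)
          have "I i \<inter> Jset jj \<noteq> {}" "I i \<inter> Jset (Suc jj) \<noteq> {}"
            using pw[OF v jj(1)] pw[OF v jj(2)] Inr by auto
          then show ?thesis using CLu_J2[OF CLi] Inr v by simp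
        qed
      qed
      ultimately show ?thesis by blast
    qed
    show ?thesis
    proof (cases "Inl (Suc j) \<in> K")
      case True then show ?thesis using pairc j by blast
    next
      case nS: False
      show ?thesis
      proof (cases "1 \<le> j \<and> Inl (j - 1) \<in> K")
        case True
        then have "Inl (Suc (j - 1)) \<in> K" using j by simp
        then show ?thesis using pairc True by blast
      next
        case nP: False
        have onlyj: "\<And>j'. Inl j' \<in> K \<Longrightarrow> j' = j"
        proof -
          fix j' assume "Inl j' \<in> K"
          then have "j' = j \<or> j' = Suc j \<or> j = Suc j'" using Jnb by blast
          then show "j' = j" using nS nP \<open>Inl j' \<in> K\<close> by auto
        qed
        have IJ: "\<And>i. Inr i \<in> K \<Longrightarrow> I i \<inter> Jset j \<noteq> {}" using pw[OF _ j] by fastforce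
        show ?thesis
        proof (cases "j = 0")
          case True
          have "\<forall>v\<in>K. real 0 \<in> CL_sets I v"
          proof
            fix v assume v: "v \<in> K"
            show "real 0 \<in> CL_sets I v"
            proof (cases v)
              case (Inl j') then show ?thesis using onlyj v True Jset_int[of 0] by auto
            next
              case (Inr i) then show ?thesis using CLu_J[OF CLi IJ] v True by auto
            qed
          qed
          then show ?thesis using l1 by (intro exI[of _ 0]) simp
        next
          case jne: False
          have Jj: "real (j - 1) \<in> Jset j" "real j \<in> Jset j" using jne Jset_int2 Jset_int by auto
          show ?thesis
          proof (cases "\<forall>i. Inr i \<in> K \<longrightarrow> real (j - 1) \<in> I i")
            case True
            have "\<forall>v\<in>K. real (j - 1) \<in> CL_sets I v"
            proof
              fix v assume v: "v \<in> K"
              show "real (j - 1) \<in> CL_sets I v"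
              proof (cases v)
                case (Inl j') then show ?thesis using onlyj v Jj by auto
              next
                case (Inr i) then show ?thesis using True v by auto
              qed
            qed
            moreover have "j - 1 < l" using jl jne by linarith
            ultimately show ?thesis by blast
          next
            case False
            then obtain i1 where i1: "Inr i1 \<in> K" "real (j - 1) \<notin> I i1" by blast
            then have ji1: "real j \<in> I i1" using CLu_J[OF CLi IJ, of i1] jne by auto
            then have "real j < real l" using CLu_bounds(2)[OF CLi[OF i1(1)]] by blast
            then have jl2: "j < l" by simp
            have allj: "real j \<in> I i" if iK: "Inr i \<in> K" for i
            proof (rule ccontr)
              assume nj: "real j \<notin> I i"
              then have ji: "real (j - 1) \<in> I i" using CLu_J[OF CLi IJ, of i] iK jne by auto
              have "real (j - 1) + 1 \<notin> I i \<longrightarrow> real (j - 1) + 1 \<notin> I i1"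
                using iv[OF iK i1(1)] ji i1(2) by blast
              moreover have "real (j - 1) + 1 = real j" using jne by (simp add: of_nat_diff)
              ultimately show False using nj ji1 by simp
            qed
            have "\<forall>v\<in>K. real j \<in> CL_sets I v"
            proof
              fix v assume v: "v \<in> K"
              show "real j \<in> CL_sets I v"
              proof (cases v)
                case (Inl j') then show ?thesis using onlyj v Jj by auto
              next
                case (Inr i) then show ?thesis using allj v by auto
              qed
            qed
            then show ?thesis using jl2 by blast
          qed
        qed
      qed
    qed
  qed
qed



lemma CL_fin: "finite (CL_vertices l r)" unfolding CL_vertices_def by simp

lemma CL_symG: "symG W (inter_adj S)" unfolding symG_def inter_adj_def by blast

lemma CL_ncl_le:
  assumes D: "CL_data l r I"
  shows "num_max_cliques (CL_vertices l r) (inter_adj (CL_sets I)) \<le> l"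
proof -
  let ?W = "CL_vertices l r" and ?F = "inter_adj (CL_sets I)"
  define Cp where "Cp p = {v \<in> ?W. real p \<in> CL_sets I v}" for p :: nat
  have Cpc: "clique ?W ?F (Cp p)" for p
    unfolding clique_def Cp_def inter_adj_def by blast
  have "{K. maximal_clique ?W ?F K} \<subseteq> Cp ` {..<l}"
  proof
    fix K assume "K \<in> {K. maximal_clique ?W ?F K}"
    then have m: "maximal_clique ?W ?F K" by simp
    then have c: "clique ?W ?F K" unfolding maximal_clique_def by blast
    obtain p where p: "p < l" "\<forall>v\<in>K. real p \<in> CL_sets I v" using KH[OF D c] by blast
    have "K \<subseteq> Cp p" using p c unfolding Cp_def clique_def by blast
    then have "Cp p = K" using m Cpc unfolding maximal_clique_def by blast
    then show "K \<in> Cp ` {..<l}" using p by blast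
  qed
  then have "card {K. maximal_clique ?W ?F K} \<le> card (Cp ` {..<l})" by (simp add: card_mono)
  also have "\<dots> \<le> l" using card_image_le[of "{..<l}" Cp] by simp
  finally show ?thesis unfolding num_max_cliques_def .
qed

lemma CL_lip_ge:
  assumes D: "CL_data l r I"
  shows "l \<le> lip (CL_vertices l r) (inter_adj (CL_sets I))"
proof -
  let ?xs = "map Inl [0..<Suc l] :: (nat + nat) list"
  have "induced_path (CL_vertices l r) (inter_adj (CL_sets I)) ?xs"
    unfolding induced_path_def
  proof (intro conjI allI impI)
    show "?xs \<noteq> []" by simp
    show "distinct ?xs" by (simp add: distinct_map del: upt_Suc)
    show "set ?xs \<subseteq> CL_vertices l r" by auto
    fix i j assume ij: "i < length ?xs" "j < length ?xs" "i < j"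
    then have e: "?xs ! i = Inl i" "?xs ! j = Inl j" by (simp_all del: upt_Suc)
    show "inter_adj (CL_sets I) (?xs ! i) (?xs ! j) \<longleftrightarrow> j = i + 1"
      unfolding e inter_adj_def using Jset_inter[of i j] ij(3) by auto
  qed
  from ip_le[OF CL_fin this] show ?thesis by simp
qed

lemma CL_eq:
  assumes D: "CL_data l r I"
  shows "lip (CL_vertices l r) (inter_adj (CL_sets I)) = num_max_cliques (CL_vertices l r) (inter_adj (CL_sets I))"
proof -
  have ne: "CL_vertices l r \<noteq> {}" using CLv_l[of 0 l r] by blast
  have "lip (CL_vertices l r) (inter_adj (CL_sets I)) \<le> num_max_cliques (CL_vertices l r) (inter_adj (CL_sets I))"
    using lip_le_ncl[OF CL_fin ne CL_symG] .
  then show ?thesis using CL_ncl_le[OF D] CL_lip_ge[OF D] by linarith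
qed



lemma clique3:
  assumes "symG C E" "a \<in> C" "b \<in> C" "c \<in> C" "E a b" "E a c" "E b c"
  shows "clique C E {a, b, c}"
  using assms unfolding clique_def symG_def by blast

locale LA =
  fixes C :: "'a set" and E :: "'a \<Rightarrow> 'a \<Rightarrow> bool" and xs :: "'a list"
    and g :: "nat \<Rightarrow> 'a" and r :: nat
  assumes fin: "finite C" and sym: "symG C E" and irr: "\<forall>x\<in>C. \<not> E x x"
    and ip: "induced_path C E xs"
    and allQ: "\<And>K. maximal_clique C E K \<Longrightarrow> \<exists>m\<in>{1..<length xs}. K = pQ C E xs m"
    and len: "2 \<le> length xs"
    and gbij: "bij_betw g {1..r} (C - set xs)"
begin

abbreviation "Q \<equiv> pQ C E xs"
abbreviation "n \<equiv> length xs"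

definition Px :: "'a \<Rightarrow> nat set" where
  "Px x = {p. Suc p < n \<and> x \<in> Q (Suc p)}"

lemma Qp: "m \<in> {1..<n} \<Longrightarrow> maximal_clique C E (Q m) \<and> xs ! (m - 1) \<in> Q m \<and> xs ! m \<in> Q m"
  using pQ_prop[OF fin sym ip] by blast

lemma Qc: "m \<in> {1..<n} \<Longrightarrow> clique C E (Q m)"
  using Qp unfolding maximal_clique_def by blast

lemma Q3: "m \<in> {1..<n} \<Longrightarrow> j < n \<Longrightarrow> xs ! j \<in> Q m \<Longrightarrow> j = m - 1 \<or> j = m"
  using pQ_three[OF fin sym ip] by blast

lemma F5: "clique C E K \<Longrightarrow> \<exists>m\<in>{1..<n}. K \<subseteq> Q m"
proof -
  assume "clique C E K"
  then obtain K' where "maximal_clique C E K'" "K \<subseteq> K'" using maxcl_ex[OF fin] by blast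
  then show ?thesis using allQ by blast
qed

lemma setxs: "set xs \<subseteq> C"
  using ip by (simp add: induced_path_def)

lemma xsC: "j < n \<Longrightarrow> xs ! j \<in> C"
  using ip unfolding induced_path_def by auto

lemma H2:
  assumes "clique C E K" "Suc k < n" "xs ! k \<in> K" "xs ! Suc k \<in> K"
  shows "K \<subseteq> Q (Suc k)"
proof -
  obtain m where m: "m \<in> {1..<n}" "K \<subseteq> Q m" using F5[OF assms(1)] by blast
  have in1: "xs ! k \<in> Q m" "xs ! Suc k \<in> Q m" using assms(3,4) m(2) by auto
  have "k = m - 1 \<or> k = m" using Q3[OF m(1) _ in1(1)] assms(2) by simp
  moreover have "Suc k = m - 1 \<or> Suc k = m" using Q3[OF m(1) assms(2) in1(2)] .
  ultimately have "m = Suc k" using m(1) by auto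
  then show ?thesis using m by simp
qed

lemma R_notin: "x \<in> C - set xs \<Longrightarrow> j < n \<Longrightarrow> x \<noteq> xs ! j"
  by auto

lemma adjR:
  assumes x: "x \<in> C - set xs" and j: "j < n"
  shows "E x (xs ! j) \<longleftrightarrow> (1 \<le> j \<and> j - 1 \<in> Px x) \<or> j \<in> Px x"
proof
  assume e: "E x (xs ! j)"
  have "clique C E {x, xs ! j}" using clique_pair[OF sym _ xsC[OF j] e] x by blast
  then obtain m where m: "m \<in> {1..<n}" "{x, xs ! j} \<subseteq> Q m" using F5 by blast
  then have "j = m - 1 \<or> j = m" using Q3[OF m(1) j] by blast
  then show "(1 \<le> j \<and> j - 1 \<in> Px x) \<or> j \<in> Px x"
  proof
    assume "j = m - 1"
    then have "Suc j = m" using m(1) by auto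
    then have "j \<in> Px x" unfolding Px_def using m by auto
    then show ?thesis by blast
  next
    assume "j = m"
    then have "Suc (j - 1) = m" "1 \<le> j" using m(1) by auto
    then have "j - 1 \<in> Px x" unfolding Px_def using m by auto
    then show ?thesis using \<open>1 \<le> j\<close> by blast
  qed
next
  assume a: "(1 \<le> j \<and> j - 1 \<in> Px x) \<or> j \<in> Px x"
  have "\<exists>m\<in>{1..<n}. x \<in> Q m \<and> xs ! j \<in> Q m"
  proof (cases "j \<in> Px x")
    case True
    then have "Suc j < n" "x \<in> Q (Suc j)" unfolding Px_def by auto
    moreover have "xs ! j \<in> Q (Suc j)" using Qp[of "Suc j"] \<open>Suc j < n\<close> by simp
    ultimately show ?thesis by (intro bexI[of _ "Suc j"]) auto
  next
    case False
    then have "1 \<le> j" "j - 1 \<in> Px x" using a by auto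
    then have "j < n" "x \<in> Q j" unfolding Px_def by auto
    moreover have "xs ! j \<in> Q j" using Qp[of j] \<open>j < n\<close> \<open>1 \<le> j\<close> by simp
    ultimately show ?thesis using \<open>1 \<le> j\<close> by (intro bexI[of _ j]) auto
  qed
  then obtain m where m: "m \<in> {1..<n}" "x \<in> Q m" "xs ! j \<in> Q m" by blast
  show "E x (xs ! j)" using clique_E[OF Qc[OF m(1)] m(2,3)] R_notin[OF x j] by blast
qed

lemma adjRR:
  assumes x: "x \<in> C - set xs" and y: "y \<in> C - set xs" and xy: "x \<noteq> y"
  shows "E x y \<longleftrightarrow> Px x \<inter> Px y \<noteq> {}"
proof
  assume e: "E x y"
  have "clique C E {x, y}" using clique_pair[OF sym _ _ e] x y by blast
  then obtain m where m: "m \<in> {1..<n}" "{x, y} \<subseteq> Q m" using F5 by blast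
  then have "m - 1 \<in> Px x" "m - 1 \<in> Px y" unfolding Px_def by auto
  then show "Px x \<inter> Px y \<noteq> {}" by blast
next
  assume "Px x \<inter> Px y \<noteq> {}"
  then obtain p where "Suc p < n" "x \<in> Q (Suc p)" "y \<in> Q (Suc p)" unfolding Px_def by blast
  then show "E x y" using clique_E[OF Qc[of "Suc p"]] xy by auto
qed

lemma Px_ne: "x \<in> C \<Longrightarrow> Px x \<noteq> {}"
proof -
  assume x: "x \<in> C"
  have "clique C E {x}" using x unfolding clique_def by blast
  then obtain m where m: "m \<in> {1..<n}" "{x} \<subseteq> Q m" using F5 by blast
  then have "m - 1 \<in> Px x" unfolding Px_def by auto
  then show ?thesis by blast
qed

lemma Px_fin: "finite (Px x)" and Px_lt: "p \<in> Px x \<Longrightarrow> p < n - 1"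
proof -
  show "finite (Px x)" unfolding Px_def by (rule finite_subset[of _ "{..<n}"]) auto
  show "p \<in> Px x \<Longrightarrow> p < n - 1" unfolding Px_def by auto
qed

lemma T1:
  assumes x: "x \<in> C - set xs" and y: "y \<in> C - set xs" and e: "E x y"
    and j1: "j \<in> Px x" and j2: "Suc j \<in> Px y"
  shows "j \<in> Px y \<or> Suc j \<in> Px x"
proof -
  have sj: "Suc (Suc j) < n" "x \<in> Q (Suc j)" "y \<in> Q (Suc (Suc j))" using j1 j2 unfolding Px_def by auto
  have v1: "xs ! Suc j \<in> Q (Suc j)" using Qp[of "Suc j"] sj by auto
  have v2: "xs ! Suc j \<in> Q (Suc (Suc j))" using Qp[of "Suc (Suc j)"] sj by auto
  have e1: "E x (xs ! Suc j)" using clique_E[OF Qc[of "Suc j"] sj(2) v1] R_notin[OF x, of "Suc j"] sj by auto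
  have e2: "E y (xs ! Suc j)" using clique_E[OF Qc[of "Suc (Suc j)"] sj(3) v2] R_notin[OF y, of "Suc j"] sj by auto
  have "clique C E {x, y, xs ! Suc j}"
    using clique3[OF sym _ _ xsC e e1 e2] x y sj by auto
  then obtain m where m: "m \<in> {1..<n}" "{x, y, xs ! Suc j} \<subseteq> Q m" using F5 by blast
  then have "Suc j = m - 1 \<or> Suc j = m" using Q3[OF m(1), of "Suc j"] sj by auto
  then show ?thesis
  proof
    assume "Suc j = m - 1"
    then have "m = Suc (Suc j)" by simp
    then show ?thesis using m unfolding Px_def by auto
  next
    assume "Suc j = m"
    then show ?thesis using m unfolding Px_def by auto
  qed
qed

lemma nogapPx:
  assumes x: "x \<in> C - set xs"
  shows "nogap (Px x)"
  unfolding nogap_def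
proof (intro allI impI)
  fix p assume p1: "p \<in> Px x" and p2: "p + 2 \<in> Px x"
  have s: "Suc (Suc (Suc p)) < n" "x \<in> Q (Suc p)" "x \<in> Q (Suc (Suc (Suc p)))"
    using p1 p2 unfolding Px_def by auto
  have v1: "xs ! Suc p \<in> Q (Suc p)" using Qp[of "Suc p"] s by auto
  have v2: "xs ! Suc (Suc p) \<in> Q (Suc (Suc (Suc p)))" using Qp[of "Suc (Suc (Suc p))"] s by auto
  have e1: "E x (xs ! Suc p)" using clique_E[OF Qc[of "Suc p"] s(2) v1] R_notin[OF x, of "Suc p"] s by auto
  have e2: "E x (xs ! Suc (Suc p))"
    using clique_E[OF Qc[of "Suc (Suc (Suc p))"] s(3) v2] R_notin[OF x, of "Suc (Suc p)"] s by auto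
  have e3: "E (xs ! Suc p) (xs ! Suc (Suc p))" using ip_adj[OF sym ip, of "Suc p" "Suc (Suc p)"] s by auto
  have "clique C E {x, xs ! Suc p, xs ! Suc (Suc p)}"
    using clique3[OF sym _ xsC xsC e1 e2 e3] x s by auto
  then have "{x, xs ! Suc p, xs ! Suc (Suc p)} \<subseteq> Q (Suc (Suc p))"
    using H2[of _ "Suc p"] s by auto
  then show "p + 1 \<in> Px x" unfolding Px_def using s by auto
qed

definition II :: "nat \<Rightarrow> real set" where
  "II i = fset (Px (g i))"

lemma gR: "i \<in> {1..r} \<Longrightarrow> g i \<in> C - set xs"
  using gbij bij_betwE by blast

lemma ginj: "i \<in> {1..r} \<Longrightarrow> i' \<in> {1..r} \<Longrightarrow> g i = g i' \<longleftrightarrow> i = i'"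
  using gbij unfolding bij_betw_def inj_on_def by blast

lemma CLdata: "CL_data (n - 1) r II"
  unfolding CL_data_def
proof (intro conjI)
  show "1 \<le> n - 1" using len by simp
  show "\<forall>i\<in>{1..r}. CL_interval_union (n - 1) (II i)"
  proof
    fix i assume i: "i \<in> {1..r}"
    show "CL_interval_union (n - 1) (II i)" unfolding II_def
      using fset_CL[OF Px_fin Px_ne nogapPx[OF gR[OF i]]] Px_lt gR[OF i] by blast
  qed
  show "\<forall>T. T \<subseteq> {1..r} \<longrightarrow> (\<forall>p\<in>T. \<forall>q\<in>T. II p \<inter> II q \<noteq> {}) \<longrightarrow> \<Inter>(II ` T) \<noteq> {}"
  proof (intro allI impI)
    fix T assume T: "T \<subseteq> {1..r}" and pw: "\<forall>p\<in>T. \<forall>q\<in>T. II p \<inter> II q \<noteq> {}"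
    have "clique C E (g ` T)"
      unfolding clique_def
    proof (intro conjI ballI impI)
      show "g ` T \<subseteq> C" using gR T by blast
      fix a b assume ab: "a \<in> g ` T" "b \<in> g ` T" "a \<noteq> b"
      then obtain p q where pq: "p \<in> T" "q \<in> T" "a = g p" "b = g q" by blast
      have "Px a \<inter> Px b \<noteq> {}" using pw pq unfolding II_def fset_inter by blast
      then show "E a b" using adjRR[of a b] gR T pq ab(3) by blast
    qed
    then obtain m where m: "m \<in> {1..<n}" "g ` T \<subseteq> Q m" using F5 by blast
    have "real (m - 1) \<in> II p" if "p \<in> T" for p
    proof -
      have "m - 1 \<in> Px (g p)" unfolding Px_def using m that by auto
      then show ?thesis unfolding II_def using fset_int by blast
    qed
    then show "\<Inter>(II ` T) \<noteq> {}" by blast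
  qed
  show "\<forall>p\<in>{1..r}. \<forall>q\<in>{1..r}. II p \<inter> II q \<noteq> {} \<longrightarrow>
        (\<forall>j::nat. real j \<in> II p \<and> real j \<notin> II q \<longrightarrow>
           (real j + 1 \<notin> II p \<longrightarrow> real j + 1 \<notin> II q) \<and>
           (real j - 1 \<notin> II p \<longrightarrow> real j - 1 \<notin> II q))"
  proof (intro ballI impI allI)
    fix p q j assume p: "p \<in> {1..r}" and q: "q \<in> {1..r}" and pq: "II p \<inter> II q \<noteq> {}"
      and jj: "real j \<in> II p \<and> real j \<notin> II q"
    have jp: "j \<in> Px (g p)" and jq: "j \<notin> Px (g q)" using jj unfolding II_def fset_int by auto
    have "p \<noteq> q" using jp jq by blast
    then have gpq: "g p \<noteq> g q" using ginj p q by blast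
    have e: "E (g p) (g q)" using adjRR[OF gR[OF p] gR[OF q] gpq] pq unfolding II_def fset_inter by blast
    have e': "E (g q) (g p)" using e sym gR[OF p] gR[OF q] unfolding symG_def by blast
    have c1: "real j + 1 \<notin> II p \<longrightarrow> real j + 1 \<notin> II q"
    proof
      assume "real j + 1 \<notin> II p"
      moreover have rs: "real j + 1 = real (Suc j)" by simp
      ultimately have "Suc j \<notin> Px (g p)" unfolding II_def using fset_int[of "Suc j"] by metis
      then have "Suc j \<notin> Px (g q)" using T1[OF gR[OF p] gR[OF q] e jp] jq by blast
      then show "real j + 1 \<notin> II q" unfolding II_def rs fset_int .
    qed
    have c2: "real j - 1 \<notin> II p \<longrightarrow> real j - 1 \<notin> II q"
    proof
      assume a: "real j - 1 \<notin> II p"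
      show "real j - 1 \<notin> II q"
      proof (cases "j = 0")
        case True
        then show ?thesis unfolding II_def using fset_nonneg by force
      next
        case False
        then have rj: "real j - 1 = real (j - 1)" by (simp add: of_nat_diff)
        have "real (j - 1) \<notin> II p" using a rj by metis
        then have n1: "j - 1 \<notin> Px (g p)" unfolding II_def fset_int .
        have sj: "Suc (j - 1) = j" using False by simp
        have "j - 1 \<notin> Px (g q)"
        proof
          assume "j - 1 \<in> Px (g q)"
          from T1[OF gR[OF q] gR[OF p] e' this] jp sj have "j - 1 \<in> Px (g p) \<or> j \<in> Px (g q)" by simp
          then show False using n1 jq by blast
        qed
        then show ?thesis unfolding II_def rj fset_int .
      qed
    qed
    from c1 c2 show "(real j + 1 \<notin> II p \<longrightarrow> real j + 1 \<notin> II q) \<and> (real j - 1 \<notin> II p \<longrightarrow> real j - 1 \<notin> II q)"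
      by blast
  qed
qed

definition h :: "nat + nat \<Rightarrow> 'a" where
  "h v = (case v of Inl j \<Rightarrow> xs ! j | Inr i \<Rightarrow> g i)"

lemma h_simps[simp]: "h (Inl j) = xs ! j" "h (Inr i) = g i"
  unfolding h_def by simp_all

lemma iso: "graph_iso (CL_vertices (n - 1) r) (inter_adj (CL_sets II)) C E"
  unfolding graph_iso_def
proof (intro exI conjI)
  let ?W = "CL_vertices (n - 1) r"
  have dist: "distinct xs" using ip by (simp add: induced_path_def)
  have "inj_on h ?W"
  proof (rule inj_onI)
    fix u v assume u: "u \<in> ?W" and v: "v \<in> ?W" and e: "h u = h v"
    show "u = v"
    proof (cases u)
      case (Inl i)
      then have i: "i < n" using u len by auto
      show ?thesis
      proof (cases v)
        case (Inl j)
        then have "j < n" using v len by auto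
        then show ?thesis using e Inl \<open>u = Inl i\<close> i dist by (simp add: nth_eq_iff_index_eq)
      next
        case (Inr j)
        then have "g j \<in> C - set xs" using gR v by simp
        moreover have "xs ! i \<in> set xs" using i by simp
        ultimately show ?thesis using e Inr \<open>u = Inl i\<close> by auto
      qed
    next
      case (Inr i)
      then have gi: "g i \<in> C - set xs" "i \<in> {1..r}" using gR u by auto
      show ?thesis
      proof (cases v)
        case (Inl j)
        then have "j < n" using v len by auto
        then have "xs ! j \<in> set xs" by simp
        then show ?thesis using e Inl \<open>u = Inr i\<close> gi by auto
      next
        case (Inr j)
        then have "j \<in> {1..r}" using v by simp
        then show ?thesis using e Inr \<open>u = Inr i\<close> gi ginj by auto
      qed
    qed
  qed
  moreover have "h ` ?W = C"
  proof -
    have "h ` ?W = (\<lambda>j. xs ! j) ` {0..n - 1} \<union> g ` {1..r}"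
      unfolding CL_vertices_def image_Un image_image by simp
    also have "(\<lambda>j. xs ! j) ` {0..n - 1} = set xs"
    proof -
      have "x \<le> n - 1 \<longleftrightarrow> x < n" for x using len by linarith
      then have "{0..n - 1} = {0..<n}" by (intro set_eqI) simp
      then show ?thesis using nth_image[of n xs] by simp
    qed
    also have "g ` {1..r} = C - set xs" using gbij by (simp add: bij_betw_def)
    also have "set xs \<union> (C - set xs) = C" using setxs by blast
    finally show ?thesis .
  qed
  ultimately show "bij_betw h ?W C" unfolding bij_betw_def by blast
  show "\<forall>x\<in>?W. \<forall>y\<in>?W. inter_adj (CL_sets II) x y \<longleftrightarrow> E (h x) (h y)"
  proof (intro ballI)
    fix u v assume u: "u \<in> ?W" and v: "v \<in> ?W"
    show "inter_adj (CL_sets II) u v \<longleftrightarrow> E (h u) (h v)"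
    proof (cases u)
      case (Inl i)
      then have i: "i < n" using u len by auto
      show ?thesis
      proof (cases v)
        case (Inl j)
        then have j: "j < n" using v len by auto
        show ?thesis
        proof (cases "i = j")
          case True then show ?thesis using \<open>u = Inl i\<close> Inl irr xsC[OF i] unfolding inter_adj_def by auto
        next
          case False
          have "E (xs ! i) (xs ! j) \<longleftrightarrow> (j = i + 1 \<or> i = j + 1)" using ip_adj[OF sym ip i j False] .
          then show ?thesis using \<open>u = Inl i\<close> Inl False Jset_inter[of i j] unfolding inter_adj_def by auto
        qed
      next
        case (Inr k)
        then have gk: "g k \<in> C - set xs" using gR v by simp
        have "E (xs ! i) (g k) \<longleftrightarrow> E (g k) (xs ! i)" using sym gk xsC[OF i] unfolding symG_def by blast
        also have "\<dots> \<longleftrightarrow> (1 \<le> i \<and> i - 1 \<in> Px (g k)) \<or> i \<in> Px (g k)" using adjR[OF gk i] .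
        also have "\<dots> \<longleftrightarrow> fset (Px (g k)) \<inter> Jset i \<noteq> {}" using fset_J by blast
        finally show ?thesis using \<open>u = Inl i\<close> Inr unfolding inter_adj_def II_def by (auto simp: Int_commute)
      qed
    next
      case (Inr k)
      then have gk: "g k \<in> C - set xs" "k \<in> {1..r}" using gR u by auto
      show ?thesis
      proof (cases v)
        case (Inl i)
        then have i: "i < n" using v len by auto
        have "E (g k) (xs ! i) \<longleftrightarrow> (1 \<le> i \<and> i - 1 \<in> Px (g k)) \<or> i \<in> Px (g k)" using adjR[OF gk(1) i] .
        also have "\<dots> \<longleftrightarrow> fset (Px (g k)) \<inter> Jset i \<noteq> {}" using fset_J by blast
        finally show ?thesis using \<open>u = Inr k\<close> Inl unfolding inter_adj_def II_def by auto
      next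
        case (Inr k')
        then have gk': "g k' \<in> C - set xs" "k' \<in> {1..r}" using gR v by auto
        show ?thesis
        proof (cases "k = k'")
          case True then show ?thesis using \<open>u = Inr k\<close> Inr irr gk unfolding inter_adj_def by auto
        next
          case False
          then have "g k \<noteq> g k'" using ginj gk gk' by blast
          then have "E (g k) (g k') \<longleftrightarrow> Px (g k) \<inter> Px (g k') \<noteq> {}" using adjRR gk gk' by blast
          moreover have "inter_adj (CL_sets II) u v \<longleftrightarrow> fset (Px (g k)) \<inter> fset (Px (g k')) \<noteq> {}"
            using \<open>u = Inr k\<close> Inr False by (simp add: inter_adj_def II_def)
          ultimately show ?thesis using fset_inter[of "Px (g k)" "Px (g k')"] h_simps(2) \<open>u = Inr k\<close> Inr by simp
        qed
      qed
    qed
  qed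
qed

lemma result: "connected_CL_graph C E"
  unfolding connected_CL_graph_def using CLdata iso_sym[OF iso] by blast

end



lemma compA:
  assumes fin: "finite C" and ne: "C \<noteq> {}" and sym: "symG C E" and irr: "\<forall>x\<in>C. \<not> E x x"
    and eq: "lip C E = num_max_cliques C E"
  shows "connected_CL_graph C E"
proof -
  obtain xs where xs: "induced_path C E xs" "length xs - 1 = lip C E"
    using ip_ex[OF fin ne] by blast
  have "clique C E {}" unfolding clique_def by blast
  then obtain K0 where "maximal_clique C E K0" using maxcl_ex[OF fin] by blast
  then have "{K. maximal_clique C E K} \<noteq> {}" by blast
  then have "num_max_cliques C E \<ge> 1" unfolding num_max_cliques_def
    using maxcl_fin[OF fin] by (simp add: Suc_le_eq card_gt_0_iff)
  then have len: "2 \<le> length xs" using xs(2) eq by linarith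
  have sub: "pQ C E xs ` {1..<length xs} \<subseteq> {K. maximal_clique C E K}"
  proof
    fix K assume "K \<in> pQ C E xs ` {1..<length xs}"
    then obtain i where "i \<in> {1..<length xs}" "K = pQ C E xs i" by blast
    then show "K \<in> {K. maximal_clique C E K}" using pQ_prop[OF fin sym xs(1)] by simp
  qed
  have "card (pQ C E xs ` {1..<length xs}) = length xs - 1"
    using card_image[OF pQ_inj[OF fin sym xs(1)]] by simp
  then have "card (pQ C E xs ` {1..<length xs}) = card {K. maximal_clique C E K}"
    using xs(2) eq unfolding num_max_cliques_def by simp
  then have allQ: "pQ C E xs ` {1..<length xs} = {K. maximal_clique C E K}"
    using card_subset_eq[OF maxcl_fin[OF fin] sub] by blast
  have allQ': "\<exists>m\<in>{1..<length xs}. K = pQ C E xs m" if "maximal_clique C E K" for K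
  proof -
    have "K \<in> pQ C E xs ` {1..<length xs}" using allQ that by blast
    then show ?thesis by blast
  qed
  obtain g where g: "bij_betw g {1..card (C - set xs)} (C - set xs)"
    using ex_bij_betw_nat_finite_1[of "C - set xs"] fin by blast
  interpret LA C E xs g "card (C - set xs)"
    using fin sym irr xs(1) allQ' len g by unfold_locales
  show ?thesis using result .
qed

lemma compB:
  assumes fin: "finite C" and ne: "C \<noteq> {}" and cl: "connected_CL_graph C E"
  shows "lip C E = num_max_cliques C E"
proof -
  obtain l r I where D: "CL_data l r I" and iso: "graph_iso C E (CL_vertices l r) (inter_adj (CL_sets I))"
    using cl unfolding connected_CL_graph_def by blast
  have iso': "graph_iso (CL_vertices l r) (inter_adj (CL_sets I)) C E" using iso_sym[OF iso] .
  have neW: "CL_vertices l r \<noteq> {}" using CLv_l[of 0 l r] by blast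
  have "lip C E = lip (CL_vertices l r) (inter_adj (CL_sets I))"
    using iso_lip_le[OF iso fin CL_fin ne] iso_lip_le[OF iso' CL_fin fin neW] by linarith
  moreover have "num_max_cliques C E = num_max_cliques (CL_vertices l r) (inter_adj (CL_sets I))"
    using iso_ncl_le[OF iso CL_fin] iso_ncl_le[OF iso' fin] by linarith
  ultimately show ?thesis using CL_eq[OF D] by simp
qed

theorem theorem2p3:
  fixes V :: "'a set" and E :: "'a \<Rightarrow> 'a \<Rightarrow> bool"
  assumes "finite V" and "V \<noteq> {}"
    and "\<forall>x\<in>V. \<forall>y\<in>V. E x y \<longrightarrow> E y x"
    and "\<forall>x\<in>V. \<not> E x x"
  shows "ell V E = num_max_cliques V E \<longleftrightarrow> CL_graph V E"
proof -
  have sym: "symG V E" using assms(3) unfolding symG_def .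
  have each: "lip C E = num_max_cliques C E \<longleftrightarrow> connected_CL_graph C E" if C: "C \<in> components V E" for C
  proof -
    have CV: "C \<subseteq> V" "C \<noteq> {}" "finite C" using comp_props[OF assms(1) C] by auto
    have sC: "symG C E" using symG_sub[OF sym CV(1)] .
    have iC: "\<forall>x\<in>C. \<not> E x x" using assms(4) CV(1) by blast
    show ?thesis using compA[OF CV(3,2) sC iC] compB[OF CV(3,2)] by blast
  qed
  have "ell V E = num_max_cliques V E \<longleftrightarrow> (\<forall>C\<in>components V E. lip C E = num_max_cliques C E)"
    using ell_iff[OF assms(1,2) sym] .
  also have "\<dots> \<longleftrightarrow> (\<forall>C\<in>components V E. connected_CL_graph C E)" using each by blast
  also have "\<dots> \<longleftrightarrow> CL_graph V E" unfolding CL_graph_def ..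
  finally show ?thesis .
qed


end
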